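(* Let $n:\mathbb{R}\to(0,\infty)$ be an $\ell$-periodic index of refraction and consider the equation $-\frac{1}{n^2(x)}\psi''(x)=\nu^2\psi(x)$. Let $\mathbf M(\nu)$ be its transfer matrix over one period, and let $\nu_0$ be a non-degenerate band edge. For $\nu$ in a neighborhood of $\nu_0$, let $e^{\pm i\omega}$ be the eigenvalues of $\mathbf M(\nu)$, where $\omega=\omega(\nu)$ is determined by $\cos\omega=\frac12\operatorname{tr}\mathbf M(\nu)$ and $\omega(\nu_0)=0$. Then there exists an analytic matrix-valued function $\mathbf D=\mathbf D(\omega)$ with $\det\mathbf D\neq 0$ such that, for $\nu$ in this neighborhood, $$\mathbf D^{-1}\mathbf M(\nu)\mathbf D=\begin{bmatrix}\cos\omega & \dfrac{\sin\omega}{\omega}\\[2mm] -\omega\sin\omega & \cos\omega\end{bmatrix}.$$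
   Context: The transfer matrix $\mathbf M(\nu)$ is the $2\times2$ matrix mapping $(\psi(0),\psi'(0))^T$ to $(\psi(\ell),\psi'(\ell))^T$ for solutions $\psi$ of the equation; it is analytic in $\nu$ and $\det\mathbf M=1$. The bands of the spectrum are the sets where $|\operatorname{tr}\mathbf M(\nu)|\le 2$; a band edge is a point $\nu_0$ with $|\operatorname{tr}\mathbf M(\nu_0)|=2$ at the boundary of a band, and it is called non-degenerate if $\frac{d}{d\nu}\operatorname{tr}\mathbf M(\nu)\neq0$ at $\nu=\nu_0$. At $\omega=0$ the right-hand side is understood with $\frac{\sin\omega}{\omega}=1$. *)

theory Defs
  imports "HOL-Analysis.Analysis"
begin

definition vec2 :: "'a \<Rightarrow> 'a \<Rightarrow> 'a^2" where
  "vec2 a b = (\<chi> i. if i = 1 then a else b)"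

definition cmat :: "real^2^2 \<Rightarrow> complex^2^2" where
  "cmat A = (\<chi> i j. complex_of_real (A $ i $ j))"

text \<open>A (Caratheodory) solution on one period [0,l] of
  - psi''(x) / n(x)^2 = nu^2 psi(x), i.e. psi'' = - nu^2 n^2 psi, with derivative dpsi:
  psi is differentiable with derivative dpsi, and dpsi is the primitive
  of - nu^2 n^2 psi (this also covers discontinuous, e.g. layered, n).\<close>
definition is_solution ::
  "(real \<Rightarrow> real) \<Rightarrow> real \<Rightarrow> real \<Rightarrow> (real \<Rightarrow> real) \<Rightarrow> (real \<Rightarrow> real) \<Rightarrow> bool" where
  "is_solution n l \<nu> \<psi> d\<psi> \<longleftrightarrow>
     (\<forall>x\<in>{0..l}. (\<psi> has_real_derivative d\<psi> x) (at x within {0..l})) \<and>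
     (\<forall>x\<in>{0..l}. ((\<lambda>t. - (\<nu>\<^sup>2 * (n t)\<^sup>2 * \<psi> t)) has_integral (d\<psi> x - d\<psi> 0)) {0..x})"

definition is_transfer_matrix ::
  "(real \<Rightarrow> real) \<Rightarrow> real \<Rightarrow> real \<Rightarrow> real^2^2 \<Rightarrow> bool" where
  "is_transfer_matrix n l \<nu> M \<longleftrightarrow>
     (\<forall>\<psi> d\<psi>. is_solution n l \<nu> \<psi> d\<psi> \<longrightarrow> vec2 (\<psi> l) (d\<psi> l) = M *v vec2 (\<psi> 0) (d\<psi> 0))"

definition bands :: "(real \<Rightarrow> real^2^2) \<Rightarrow> real set" where
  "bands M = {\<nu>. \<bar>trace (M \<nu>)\<bar> \<le> 2}"

definition band_edge :: "(real \<Rightarrow> real^2^2) \<Rightarrow> real \<Rightarrow> bool" where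
  "band_edge M \<nu>0 \<longleftrightarrow> \<bar>trace (M \<nu>0)\<bar> = 2 \<and> \<nu>0 \<in> frontier (bands M)"

definition nondegenerate_band_edge :: "(real \<Rightarrow> real^2^2) \<Rightarrow> real \<Rightarrow> bool" where
  "nondegenerate_band_edge M \<nu>0 \<longleftrightarrow> band_edge M \<nu>0 \<and>
     (\<exists>d. ((\<lambda>\<nu>. trace (M \<nu>)) has_real_derivative d) (at \<nu>0) \<and> d \<noteq> 0)"

definition sinc :: "complex \<Rightarrow> complex" where
  "sinc w = (if w = 0 then 1 else sin w / w)"

definition normal_form :: "complex \<Rightarrow> complex^2^2" where
  "normal_form w = (\<chi> i j. if i = 1 then (if j = 1 then cos w else sinc w)
                            else (if j = 1 then - w * sin w else cos w))"

end

theory Submission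
  imports Defs "HOL-Complex_Analysis.Complex_Analysis"
begin


lemma GL:
  fixes g F :: "real \<Rightarrow> real"
  assumes x: "0 \<le> x"
    and H: "\<And>e. e > 0 \<Longrightarrow> \<exists>d>0. \<forall>z y. 0 \<le> z \<longrightarrow> z \<le> y \<longrightarrow> y \<le> x \<longrightarrow> y - z < d
               \<longrightarrow> g y - g z \<le> e * (F y - F z)"
  shows "g x \<le> g 0"
proof -
  have main: "g x - g 0 \<le> e * (F x - F 0)" if e: "e > 0" for e
  proof -
    obtain d where d: "d > 0" and dH: "\<forall>z y. 0 \<le> z \<longrightarrow> z \<le> y \<longrightarrow> y \<le> x \<longrightarrow> y - z < d
               \<longrightarrow> g y - g z \<le> e * (F y - F z)" using H[OF e] by blast
    have ind: "\<forall>y. 0 \<le> y \<and> y \<le> x \<and> y \<le> real m * (d/2) \<longrightarrow> g y - g 0 \<le> e * (F y - F 0)" for m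
    proof (induction m)
      case 0
      then show ?case by auto
    next
      case (Suc m)
      show ?case
      proof (intro allI impI)
        fix y assume y: "0 \<le> y \<and> y \<le> x \<and> y \<le> real (Suc m) * (d / 2)"
        define z where "z = max 0 (y - d/2)"
        have z: "0 \<le> z" "z \<le> y" "z \<le> x" "y - z < d"
          using y d by (auto simp: z_def algebra_simps)
        have "z \<le> real m * (d/2)"
        proof (cases "y - d/2 \<le> 0")
          case True thus ?thesis using d by (simp add: z_def)
        next
          case False thus ?thesis using y d by (simp add: z_def algebra_simps)
        qed
        note z = z this
        have "g z - g 0 \<le> e * (F z - F 0)" using Suc.IH z by auto
        moreover have "g y - g z \<le> e * (F y - F z)" using dH z y by auto
        ultimately show "g y - g 0 \<le> e * (F y - F 0)" by (simp add: algebra_simps)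
      qed
    qed
    obtain m where "x / (d/2) \<le> real m" using real_arch_simple by blast
    hence "x \<le> real m * (d/2)" using d by (simp add: field_simps)
    thus ?thesis using ind[of m] x by auto
  qed
  show ?thesis
  proof (rule ccontr)
    assume "\<not> g x \<le> g 0"
    hence pos: "g x - g 0 > 0" by simp
    show False
    proof (cases "F x - F 0 \<le> 0")
      case True
      then show ?thesis using main[of 1] pos by simp
    next
      case False
      define e where "e = (g x - g 0) / (2 * (F x - F 0))"
      have "e > 0" using pos False by (simp add: e_def)
      have "e * (F x - F 0) = (g x - g 0)/2" using False by (simp add: e_def field_simps)
      with main[OF \<open>e>0\<close>] have "g x - g 0 \<le> (g x - g 0)/2" by simp
      thus False using pos by simp
    qed
  qed
qed

lemma pow_alg:
  fixes a b :: real
  assumes "0 \<le> a" "a \<le> b"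
  shows "a^j * (b - a) \<le> (b^(Suc j) - a^(Suc j)) / real (Suc j)"
proof -
  have eq: "b^(Suc j) - a^(Suc j) = (b - a) * (\<Sum>i<Suc j. a^(Suc j - Suc i) * b^i)"
    by (rule power_diff_sumr2)
  have "(\<Sum>i<Suc j. a^j) \<le> (\<Sum>i<Suc j. a^(Suc j - Suc i) * b^i)"
  proof (rule sum_mono)
    fix i assume "i \<in> {..<Suc j}"
    hence i: "i \<le> j" by simp
    have "a^j = a^(j - i) * a^i" using i by (simp add: power_add[symmetric])
    also have "\<dots> \<le> a^(j - i) * b^i"
      using assms by (intro mult_left_mono power_mono) auto
    finally show "a^j \<le> a^(Suc j - Suc i) * b^i" by simp
  qed
  hence "real (Suc j) * a^j \<le> (\<Sum>i<Suc j. a^(Suc j - Suc i) * b^i)" by simp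
  hence "(b - a) * (real (Suc j) * a^j) \<le> b^(Suc j) - a^(Suc j)"
    unfolding eq using assms by (intro mult_left_mono) auto
  thus ?thesis by (simp add: field_simps)
qed

lemma GL_abs:
  fixes g F :: "real \<Rightarrow> real"
  assumes x: "0 \<le> x"
    and H: "\<And>e. e > 0 \<Longrightarrow> \<exists>d>0. \<forall>z y. 0 \<le> z \<longrightarrow> z \<le> y \<longrightarrow> y \<le> x \<longrightarrow> y - z < d
               \<longrightarrow> \<bar>g y - g z\<bar> \<le> e * (F y - F z)"
  shows "g x = g 0"
proof -
  have "g x \<le> g 0"
  proof (rule GL[OF x])
    fix e :: real assume "e > 0"
    then obtain d where "d > 0" and d: "\<forall>z y. 0 \<le> z \<longrightarrow> z \<le> y \<longrightarrow> y \<le> x \<longrightarrow> y - z < d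
               \<longrightarrow> \<bar>g y - g z\<bar> \<le> e * (F y - F z)" using H by blast
    show "\<exists>d>0. \<forall>z y. 0 \<le> z \<longrightarrow> z \<le> y \<longrightarrow> y \<le> x \<longrightarrow> y - z < d
               \<longrightarrow> g y - g z \<le> e * (F y - F z)"
      using \<open>d > 0\<close> d by (intro exI[of _ d]) (force simp: abs_le_iff)
  qed
  moreover have "(\<lambda>t. - g t) x \<le> (\<lambda>t. - g t) 0"
  proof (rule GL[OF x])
    fix e :: real assume "e > 0"
    then obtain d where "d > 0" and d: "\<forall>z y. 0 \<le> z \<longrightarrow> z \<le> y \<longrightarrow> y \<le> x \<longrightarrow> y - z < d
               \<longrightarrow> \<bar>g y - g z\<bar> \<le> e * (F y - F z)" using H by blast
    show "\<exists>d>0. \<forall>z y. 0 \<le> z \<longrightarrow> z \<le> y \<longrightarrow> y \<le> x \<longrightarrow> y - z < d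
               \<longrightarrow> (\<lambda>t. - g t) y - (\<lambda>t. - g t) z \<le> e * (F y - F z)"
      using \<open>d > 0\<close> d by (intro exI[of _ d]) (force simp: abs_le_iff)
  qed
  ultimately show ?thesis by simp
qed

lemma entire_from_balls:
  assumes "\<And>R. (f :: complex \<Rightarrow> complex) holomorphic_on ball 0 R"
  shows "f holomorphic_on UNIV"
  unfolding holomorphic_on_def
proof
  fix z :: complex
  have "f field_differentiable (at z)"
    by (rule holomorphic_on_imp_differentiable_at[OF assms[of "norm z + 1"]]) auto
  thus "f field_differentiable (at z within UNIV)" by simp
qed

primrec U :: "(real \<Rightarrow> real) \<Rightarrow> real \<Rightarrow> real \<Rightarrow> nat \<Rightarrow> real \<Rightarrow> real" where
  "U q a b 0 = (\<lambda>x. a + b * x)"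
| "U q a b (Suc k) = (\<lambda>x. integral {0..x} (\<lambda>s. - integral {0..s} (\<lambda>t. q t * U q a b k t)))"

definition dU :: "(real \<Rightarrow> real) \<Rightarrow> real \<Rightarrow> real \<Rightarrow> nat \<Rightarrow> real \<Rightarrow> real" where
  "dU q a b k x = (if k = 0 then b else - integral {0..x} (\<lambda>t. q t * U q a b (k - 1) t))"

lemma dU_0[simp]: "dU q a b 0 x = b" by (simp add: dU_def)
lemma dU_Suc: "dU q a b (Suc k) x = - integral {0..x} (\<lambda>t. q t * U q a b k t)" by (simp add: dU_def)
lemma dU_Suc_fun: "dU q a b (Suc k) = (\<lambda>x. - integral {0..x} (\<lambda>t. q t * U q a b k t))"
  by (simp add: fun_eq_iff dU_def)
lemma U_Suc': "U q a b (Suc k) x = integral {0..x} (dU q a b (Suc k))"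
  by (simp only: U.simps dU_Suc_fun)

lemma series_integral:
  fixes f :: "nat \<Rightarrow> real \<Rightarrow> real" and S :: "real set"
  assumes fi: "\<And>k. f k integrable_on S" and hi: "h integrable_on S"
    and hnn: "\<And>t. t \<in> S \<Longrightarrow> 0 \<le> h t" and Bnn: "\<And>k. 0 \<le> B k" and Bs: "summable B"
    and le: "\<And>k t. t \<in> S \<Longrightarrow> \<bar>f k t\<bar> \<le> h t * B k"
  shows "(\<lambda>t. \<Sum>k. f k t) integrable_on S"
    "(\<lambda>k. integral S (f k)) sums integral S (\<lambda>t. \<Sum>k. f k t)"
proof -
  define P where "P N t = (\<Sum>k<N. f k t)" for N t
  have Pi: "P N integrable_on S" for N
    unfolding P_def by (rule Henstock_Kurzweil_Integration.integrable_sum) (auto simp: fi)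
  have hi': "(\<lambda>t. h t * suminf B) integrable_on S" using hi by (rule integrable_on_mult_left)
  have Pb: "norm (P N t) \<le> h t * suminf B" if t: "t \<in> S" for N t
  proof -
    have "norm (P N t) \<le> (\<Sum>k<N. \<bar>f k t\<bar>)" unfolding P_def using sum_abs by simp
    also have "\<dots> \<le> (\<Sum>k<N. h t * B k)" using le[OF t] by (intro sum_mono) auto
    also have "\<dots> = h t * (\<Sum>k<N. B k)" by (simp add: sum_distrib_left)
    also have "\<dots> \<le> h t * suminf B"
      using hnn[OF t] Bnn Bs by (intro mult_left_mono sum_le_suminf) auto
    finally show ?thesis .
  qed
  have sm: "summable (\<lambda>k. f k t)" if t: "t \<in> S" for t
    by (rule summable_comparison_test[OF _ summable_mult[OF Bs, of "h t"]]) (use le[OF t] in auto)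
  have conv: "(\<lambda>N. P N t) \<longlonglongrightarrow> (\<Sum>k. f k t)" if t: "t \<in> S" for t
    unfolding P_def using summable_LIMSEQ[OF sm[OF t]] .
  note dc = dominated_convergence[OF Pi hi' Pb conv]
  show "(\<lambda>t. \<Sum>k. f k t) integrable_on S" using dc(1) .
  have "integral S (P N) = (\<Sum>k<N. integral S (f k))" for N
    unfolding P_def by (rule Henstock_Kurzweil_Integration.integral_sum) (auto simp: fi)
  thus "(\<lambda>k. integral S (f k)) sums integral S (\<lambda>t. \<Sum>k. f k t)"
    using dc(2) by (simp add: sums_def)
qed

definition psi :: "(real \<Rightarrow> real) \<Rightarrow> real \<Rightarrow> real \<Rightarrow> real \<Rightarrow> real \<Rightarrow> real" where
  "psi q a b lam x = (\<Sum>k. lam ^ k * U q a b k x)"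
definition dpsi :: "(real \<Rightarrow> real) \<Rightarrow> real \<Rightarrow> real \<Rightarrow> real \<Rightarrow> real \<Rightarrow> real" where
  "dpsi q a b lam x = (\<Sum>k. lam ^ k * dU q a b k x)"

lemma U_at0: "U q a b k 0 = (if k = 0 then a else 0)"
  by (cases k) auto
lemma dU_at0: "dU q a b k 0 = (if k = 0 then b else 0)"
  by (cases k) (auto simp: dU_Suc)

lemma psi_at0: "psi q a b lam 0 = a"
proof -
  have "(\<lambda>k. lam ^ k * U q a b k 0) = (\<lambda>k. if k = 0 then a else 0)" by (auto simp: U_at0)
  thus ?thesis unfolding psi_def using sums_single[of 0 "\<lambda>_. a"] sums_unique by metis
qed

lemma dpsi_at0: "dpsi q a b lam 0 = b"
proof -
  have "(\<lambda>k. lam ^ k * dU q a b k 0) = (\<lambda>k. if k = 0 then b else 0)" by (auto simp: dU_at0)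
  thus ?thesis unfolding dpsi_def using sums_single[of 0 "\<lambda>_. b"] sums_unique by metis
qed

definition Fc :: "(real \<Rightarrow> real) \<Rightarrow> real \<Rightarrow> real \<Rightarrow> real \<Rightarrow> complex \<Rightarrow> complex" where
  "Fc q a b l z = (\<Sum>k. complex_of_real (U q a b k l) * z ^ k)"
definition dFc :: "(real \<Rightarrow> real) \<Rightarrow> real \<Rightarrow> real \<Rightarrow> real \<Rightarrow> complex \<Rightarrow> complex" where
  "dFc q a b l z = (\<Sum>k. complex_of_real (dU q a b k l) * z ^ k)"

definition FF :: "(real \<Rightarrow> real) \<Rightarrow> real \<Rightarrow> real" where
  "FF q x = 1 + x + integral {0..x} q"

context
  fixes q :: "real \<Rightarrow> real" and l :: real
  assumes l_pos: "0 < l" and q_nn: "\<And>x. 0 \<le> q x" and q_int: "q integrable_on {0..l}"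
begin

lemma q_abs: "q absolutely_integrable_on {0..l}"
  using q_int q_nn by (intro nonnegative_absolutely_integrable_1) auto

lemma q_int_sub: "x \<in> {0..l} \<Longrightarrow> q integrable_on {0..x}"
  using q_int by (rule integrable_subinterval_real) auto

lemma qprod_abs:
  assumes "continuous_on {0..l} f"
  shows "(\<lambda>t. f t * q t) absolutely_integrable_on {0..l}"
proof (rule absolutely_integrable_bounded_measurable_product_real)
  show "f \<in> borel_measurable (lebesgue_on {0..l})"
    using assms by (intro continuous_imp_measurable_on_sets_lebesgue) auto
  show "bounded (f ` {0..l})"
    using assms by (intro compact_imp_bounded compact_continuous_image) auto
qed (auto simp: q_abs)

lemma qprod_int:
  assumes "continuous_on {0..l} f" "x \<in> {0..l}"
  shows "(\<lambda>t. q t * f t) integrable_on {0..x}"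
proof -
  have "(\<lambda>t. f t * q t) integrable_on {0..l}"
    using qprod_abs[OF assms(1)] by (simp add: absolutely_integrable_on_def)
  hence "(\<lambda>t. f t * q t) integrable_on {0..x}"
    by (rule integrable_subinterval_real) (use assms in auto)
  thus ?thesis by (simp add: mult.commute)
qed

lemma qprod_int_l:
  assumes "continuous_on {0..l} f"
  shows "(\<lambda>t. q t * f t) integrable_on {0..l}"
  using qprod_int[OF assms, of l] l_pos by simp

lemma U_cont: "continuous_on {0..l} (U q a b k) \<and> continuous_on {0..l} (dU q a b k)"
proof (induction k)
  case 0
  then show ?case by (auto intro!: continuous_intros simp: dU_def)
next
  case (Suc k)
  have i: "(\<lambda>t. q t * U q a b k t) integrable_on {0..l}"
    using Suc qprod_int_l by blast
  have c1: "continuous_on {0..l} (dU q a b (Suc k))"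
    unfolding dU_Suc using indefinite_integral_continuous_1[OF i]
    by (intro continuous_intros) auto
  have c2: "continuous_on {0..l} (U q a b (Suc k))"
    unfolding U_Suc' using indefinite_integral_continuous_1[OF integrable_continuous_real[OF c1]] .
  show ?case using c1 c2 by simp
qed

lemma FF_cont: "continuous_on {0..l} (FF q)"
  unfolding FF_def[abs_def]
  by (intro continuous_intros indefinite_integral_continuous_1 q_int)

lemma int_split:
  fixes f :: "real \<Rightarrow> real"
  assumes "f integrable_on {0..l}" "0 \<le> z" "z \<le> y" "y \<le> l"
  shows "integral {0..y} f = integral {0..z} f + integral {z..y} f"
proof -
  have "f integrable_on {0..y}" by (rule integrable_subinterval_real[OF assms(1)]) (use assms in auto)
  thus ?thesis using Henstock_Kurzweil_Integration.integral_combine[where a=0 and c=z and b=y and f=f] assms by simp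
qed

lemma FF_diff:
  assumes "0 \<le> z" "z \<le> y" "y \<le> l"
  shows "FF q y - FF q z = integral {z..y} (\<lambda>t. 1 + q t)"
proof -
  have qi: "q integrable_on {z..y}" by (rule integrable_subinterval_real[OF q_int]) (use assms in auto)
  have "integral {z..y} (\<lambda>t. 1 + q t) = integral {z..y} (\<lambda>t. 1) + integral {z..y} q"
    by (rule integral_add) (auto simp: qi)
  hence "integral {z..y} (\<lambda>t. 1 + q t) = (y - z) + integral {z..y} q"
    using assms by simp
  thus ?thesis using int_split[OF q_int assms] by (simp add: FF_def)
qed

lemma FF_mono:
  assumes "0 \<le> z" "z \<le> y" "y \<le> l"
  shows "FF q z \<le> FF q y"
proof -
  have qi: "q integrable_on {z..y}" by (rule integrable_subinterval_real[OF q_int]) (use assms in auto)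
  have "0 \<le> integral {z..y} (\<lambda>t. 1 + q t)"
    using qi q_nn by (intro integral_nonneg integrable_add) auto
  thus ?thesis using FF_diff[OF assms] by simp
qed

lemma FF_ge1: "x \<in> {0..l} \<Longrightarrow> 1 \<le> FF q x"
  using FF_mono[of 0 x] by (simp add: FF_def)

lemma p_int:
  assumes "continuous_on {0..l} f" "0 \<le> c" "d \<le> l"
  shows "(\<lambda>t. (1 + q t) * f t) integrable_on {c..d}"
proof -
  have "(\<lambda>t. f t + q t * f t) integrable_on {0..l}"
    using qprod_int_l[OF assms(1)] integrable_continuous_real[OF assms(1)] by (intro integrable_add)
  hence "(\<lambda>t. (1 + q t) * f t) integrable_on {0..l}" by (simp add: algebra_simps)
  thus ?thesis by (rule integrable_subinterval_real) (use assms in auto)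
qed

lemma KL:
  assumes x: "x \<in> {0..l}"
  shows "integral {0..x} (\<lambda>t. (1 + q t) * FF q t ^ j) \<le> FF q x ^ Suc j / real (Suc j)"
proof -
  let ?F = "FF q"
  let ?h = "\<lambda>t. (1 + q t) * FF q t ^ j"
  define g where "g y = integral {0..y} ?h - ?F y ^ Suc j / real (Suc j)" for y
  have cFj: "continuous_on {0..l} (\<lambda>t. ?F t ^ j)" using FF_cont by (intro continuous_intros)
  have hint: "?h integrable_on {0..l}" using p_int[OF cFj] l_pos by auto
  have "g x \<le> g 0"
  proof (rule GL)
    show "0 \<le> x" using x by simp
    fix e :: real assume e: "e > 0"
    have "uniformly_continuous_on {0..l} (\<lambda>t. ?F t ^ j)"
      using cFj by (intro compact_uniformly_continuous) auto
    then obtain d where d: "d > 0" and dd: "\<And>s t. s \<in> {0..l} \<Longrightarrow> t \<in> {0..l} \<Longrightarrow> dist t s < d \<Longrightarrow>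
        dist (?F t ^ j) (?F s ^ j) < e"
      unfolding uniformly_continuous_on_def using e by metis
    show "\<exists>d>0. \<forall>z y. 0 \<le> z \<longrightarrow> z \<le> y \<longrightarrow> y \<le> x \<longrightarrow> y - z < d \<longrightarrow> g y - g z \<le> e * (?F y - ?F z)"
    proof (intro exI[of _ d] conjI allI impI d)
      fix z y assume zy: "0 \<le> z" "z \<le> y" "y \<le> x" "y - z < d"
      have yl: "y \<le> l" using zy x by auto
      have split: "integral {0..y} ?h = integral {0..z} ?h + integral {z..y} ?h"
        using int_split[OF hint zy(1,2) yl] .
      have i1: "?h integrable_on {z..y}" using p_int[OF cFj] zy yl by auto
      have i2: "(\<lambda>t. (1 + q t) * ?F y ^ j) integrable_on {z..y}"
        using p_int[of "\<lambda>_. ?F y ^ j"] zy yl by auto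
      have "integral {z..y} ?h \<le> integral {z..y} (\<lambda>t. (1 + q t) * ?F y ^ j)"
      proof (rule integral_le[OF i1 i2])
        fix t assume t: "t \<in> {z..y}"
        have "?F t \<le> ?F y" using FF_mono[of t y] t zy yl by auto
        moreover have "0 \<le> ?F t" using FF_ge1[of t] t zy yl by auto
        ultimately have "?F t ^ j \<le> ?F y ^ j" by (rule power_mono)
        thus "?h t \<le> (1 + q t) * ?F y ^ j" using q_nn[of t] by (intro mult_left_mono) auto
      qed
      also have "\<dots> = ?F y ^ j * (?F y - ?F z)"
        using FF_diff[OF zy(1,2) yl] by (simp add: mult.commute)
      finally have A: "integral {z..y} ?h \<le> ?F y ^ j * (?F y - ?F z)" .
      have B: "?F z ^ j * (?F y - ?F z) \<le> (?F y ^ Suc j - ?F z ^ Suc j) / real (Suc j)"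
        using FF_mono[OF zy(1,2) yl] FF_ge1[of z] zy yl by (intro pow_alg) auto
      have C: "?F y ^ j - ?F z ^ j \<le> e"
        using dd[of z y] zy yl d by (auto simp: dist_real_def)
      have Dn: "0 \<le> ?F y - ?F z" using FF_mono[OF zy(1,2) yl] by simp
      have "g y - g z = integral {z..y} ?h - (?F y ^ Suc j - ?F z ^ Suc j) / real (Suc j)"
        unfolding g_def split diff_divide_distrib by linarith
      also have "\<dots> \<le> ?F y ^ j * (?F y - ?F z) - ?F z ^ j * (?F y - ?F z)" using A B by linarith
      also have "\<dots> = (?F y ^ j - ?F z ^ j) * (?F y - ?F z)" by (simp add: algebra_simps)
      also have "\<dots> \<le> e * (?F y - ?F z)" using C Dn by (intro mult_right_mono) auto
      finally show "g y - g z \<le> e * (?F y - ?F z)" .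
    qed
  qed
  hence "integral {0..x} ?h \<le> ?F x ^ Suc j / real (Suc j) - 1 / real (Suc j)"
    by (simp add: g_def FF_def)
  also have "\<dots> \<le> ?F x ^ Suc j / real (Suc j)" by simp
  finally show ?thesis .
qed

lemma int_bound_step:
  fixes f :: "real \<Rightarrow> real" and C :: real
  assumes x: "x \<in> {0..l}" and fi: "f integrable_on {0..x}" and C: "0 \<le> C"
    and le: "\<And>t. t \<in> {0..x} \<Longrightarrow> \<bar>f t\<bar> \<le> (1 + q t) * (C * FF q t ^ j / fact j)"
  shows "\<bar>integral {0..x} f\<bar> \<le> C * FF q x ^ Suc j / fact (Suc j)"
proof -
  have cFj: "continuous_on {0..l} (\<lambda>t. FF q t ^ j)" using FF_cont by (intro continuous_intros)
  have gi: "(\<lambda>t. (1 + q t) * FF q t ^ j) integrable_on {0..x}" using p_int[OF cFj] x by auto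
  have "\<bar>integral {0..x} f\<bar> \<le> integral {0..x} (\<lambda>t. (C / fact j) * ((1 + q t) * FF q t ^ j))"
    using integral_norm_bound_integral[OF fi integrable_on_mult_right[OF gi], of "C / fact j"] le
    by (simp add: field_simps)
  also have "\<dots> = (C / fact j) * integral {0..x} (\<lambda>t. (1 + q t) * FF q t ^ j)" by simp
  also have "\<dots> \<le> (C / fact j) * (FF q x ^ Suc j / real (Suc j))"
    using KL[OF x, of j] C by (intro mult_left_mono) auto
  also have "\<dots> = C * FF q x ^ Suc j / fact (Suc j)" by (simp add: field_simps)
  finally show ?thesis .
qed

definition "KK a b = \<bar>a\<bar> + \<bar>b\<bar> * (1 + l)"

lemma KK_nn: "0 \<le> KK a b" using l_pos by (simp add: KK_def)

lemma U_bound: "\<forall>x\<in>{0..l}. \<bar>U q a b k x\<bar> \<le> KK a b * FF q x ^ (2*k) / fact (2*k)"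
proof (induction k)
  case 0
  show ?case
  proof
    fix x assume x: "x \<in> {0..l}"
    have "\<bar>a + b * x\<bar> \<le> \<bar>a\<bar> + \<bar>b\<bar> * x" using x by (simp add: abs_mult abs_triangle_ineq order_trans[OF abs_triangle_ineq])
    also have "\<dots> \<le> KK a b" using x by (auto simp: KK_def intro!: mult_left_mono)
    finally show "\<bar>U q a b 0 x\<bar> \<le> KK a b * FF q x ^ (2*0) / fact (2*0)" by simp
  qed
next
  case (Suc k)
  have cU: "continuous_on {0..l} (U q a b k)" using U_cont by blast
  have dUb: "\<bar>dU q a b (Suc k) x\<bar> \<le> KK a b * FF q x ^ Suc (2*k) / fact (Suc (2*k))"
    if x: "x \<in> {0..l}" for x
  proof -
    have "\<bar>integral {0..x} (\<lambda>t. q t * U q a b k t)\<bar> \<le> KK a b * FF q x ^ Suc (2*k) / fact (Suc (2*k))"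
    proof (rule int_bound_step[OF x qprod_int[OF cU x] KK_nn])
      fix t assume t: "t \<in> {0..x}"
      hence tl: "t \<in> {0..l}" using x by auto
      have "\<bar>q t * U q a b k t\<bar> = q t * \<bar>U q a b k t\<bar>" using q_nn[of t] by (simp add: abs_mult)
      also have "\<dots> \<le> q t * (KK a b * FF q t ^ (2*k) / fact (2*k))"
        using Suc.IH tl q_nn[of t] by (intro mult_left_mono) auto
      also have "\<dots> \<le> (1 + q t) * (KK a b * FF q t ^ (2*k) / fact (2*k))"
        using KK_nn FF_ge1[OF tl] by (intro mult_right_mono) auto
      finally show "\<bar>q t * U q a b k t\<bar> \<le> (1 + q t) * (KK a b * FF q t ^ (2*k) / fact (2*k))" .
    qed
    thus ?thesis by (simp add: dU_Suc)
  qed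
  show ?case
  proof
    fix x assume x: "x \<in> {0..l}"
    have cdU: "continuous_on {0..l} (dU q a b (Suc k))" using U_cont by blast
    have "\<bar>integral {0..x} (dU q a b (Suc k))\<bar> \<le> KK a b * FF q x ^ Suc (Suc (2*k)) / fact (Suc (Suc (2*k)))"
    proof (rule int_bound_step[OF x _ KK_nn])
      show "dU q a b (Suc k) integrable_on {0..x}"
        by (rule integrable_subinterval_real[OF integrable_continuous_real[OF cdU]]) (use x in auto)
      fix t assume t: "t \<in> {0..x}"
      hence tl: "t \<in> {0..l}" using x by auto
      have "\<bar>dU q a b (Suc k) t\<bar> \<le> 1 * (KK a b * FF q t ^ Suc (2*k) / fact (Suc (2*k)))"
        using dUb[OF tl] by simp
      also have "\<dots> \<le> (1 + q t) * (KK a b * FF q t ^ Suc (2*k) / fact (Suc (2*k)))"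
        using KK_nn FF_ge1[OF tl] q_nn[of t] by (intro mult_right_mono) auto
      finally show "\<bar>dU q a b (Suc k) t\<bar> \<le> (1 + q t) * (KK a b * FF q t ^ Suc (2*k) / fact (Suc (2*k)))" .
    qed
    moreover have "2 * Suc k = Suc (Suc (2*k))" by simp
    ultimately show "\<bar>U q a b (Suc k) x\<bar> \<le> KK a b * FF q x ^ (2 * Suc k) / fact (2 * Suc k)"
      unfolding U_Suc' by metis
  qed
qed

lemma dU_bound:
  assumes x: "x \<in> {0..l}"
  shows "\<bar>dU q a b (Suc k) x\<bar> \<le> KK a b * FF q x ^ Suc (2*k) / fact (Suc (2*k))"
proof -
  have cU: "continuous_on {0..l} (U q a b k)" using U_cont by blast
  have "\<bar>integral {0..x} (\<lambda>t. q t * U q a b k t)\<bar> \<le> KK a b * FF q x ^ Suc (2*k) / fact (Suc (2*k))"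
  proof (rule int_bound_step[OF x qprod_int[OF cU x] KK_nn])
    fix t assume t: "t \<in> {0..x}"
    hence tl: "t \<in> {0..l}" using x by auto
    have "\<bar>q t * U q a b k t\<bar> = q t * \<bar>U q a b k t\<bar>" using q_nn[of t] by (simp add: abs_mult)
    also have "\<dots> \<le> q t * (KK a b * FF q t ^ (2*k) / fact (2*k))"
      using U_bound tl q_nn[of t] by (intro mult_left_mono) auto
    also have "\<dots> \<le> (1 + q t) * (KK a b * FF q t ^ (2*k) / fact (2*k))"
      using KK_nn FF_ge1[OF tl] by (intro mult_right_mono) auto
    finally show "\<bar>q t * U q a b k t\<bar> \<le> (1 + q t) * (KK a b * FF q t ^ (2*k) / fact (2*k))" .
  qed
  thus ?thesis by (simp add: dU_Suc)
qed

definition "GG = FF q l ^ 2"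

lemma GG_ge1: "1 \<le> GG"
  using FF_ge1[of l] l_pos by (simp add: GG_def one_le_power)

lemma FF_le: "x \<in> {0..l} \<Longrightarrow> FF q x \<le> FF q l"
  using FF_mono[of x l] by auto

lemma U_unif:
  assumes x: "x \<in> {0..l}"
  shows "\<bar>U q a b k x\<bar> \<le> KK a b * GG ^ k / fact k"
proof -
  have "\<bar>U q a b k x\<bar> \<le> KK a b * FF q x ^ (2*k) / fact (2*k)" using U_bound x by blast
  also have "\<dots> \<le> KK a b * FF q l ^ (2*k) / fact (2*k)"
    using FF_le[OF x] FF_ge1[OF x] KK_nn
    by (intro divide_right_mono mult_left_mono power_mono) auto
  also have "\<dots> \<le> KK a b * FF q l ^ (2*k) / fact k"
    using KK_nn FF_ge1[of l] l_pos
    by (intro divide_left_mono mult_nonneg_nonneg zero_le_power) (auto simp: fact_mono)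
  also have "FF q l ^ (2*k) = GG ^ k" by (simp add: GG_def power_mult)
  finally show ?thesis .
qed

lemma dU_unif:
  assumes x: "x \<in> {0..l}"
  shows "\<bar>dU q a b k x\<bar> \<le> KK a b * GG ^ k / fact k"
proof (cases k)
  case 0
  have "\<bar>b\<bar> \<le> \<bar>b\<bar> * (1 + l)" using l_pos by (simp add: mult_le_cancel_left1)
  then show ?thesis using 0 by (simp add: KK_def)
next
  case (Suc m)
  have F1: "1 \<le> FF q l" using FF_ge1[of l] l_pos by simp
  have "\<bar>dU q a b k x\<bar> \<le> KK a b * FF q x ^ Suc (2*m) / fact (Suc (2*m))" using dU_bound[OF x] Suc by simp
  also have "\<dots> \<le> KK a b * FF q l ^ Suc (2*m) / fact (Suc (2*m))"
    using FF_le[OF x] FF_ge1[OF x] KK_nn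
    by (intro divide_right_mono mult_left_mono power_mono) auto
  also have "\<dots> \<le> KK a b * FF q l ^ (2*k) / fact (Suc (2*m))"
    using KK_nn F1 Suc by (intro divide_right_mono mult_left_mono power_increasing) auto
  also have "\<dots> \<le> KK a b * FF q l ^ (2*k) / fact k"
  proof -
    have fm: "fact k \<le> (fact (Suc (2*m)) :: real)" using Suc by (intro fact_mono) auto
    show ?thesis using KK_nn F1 fm
      by (intro divide_left_mono mult_nonneg_nonneg zero_le_power) auto
  qed
  also have "FF q l ^ (2*k) = GG ^ k" by (simp add: GG_def power_mult)
  finally show ?thesis .
qed

lemma E_summable: "summable (\<lambda>k. KK a b * (c * GG) ^ k / fact k)"
proof -
  have "summable (\<lambda>k. KK a b * (inverse (fact k) * (c * GG) ^ k))"
    by (intro summable_mult summable_exp)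
  thus ?thesis by (simp add: field_simps)
qed

lemma E_bound:
  assumes x: "x \<in> {0..l}"
  shows "\<bar>lam ^ k * U q a b k x\<bar> \<le> KK a b * (\<bar>lam\<bar> * GG) ^ k / fact k"
    and "\<bar>lam ^ k * dU q a b k x\<bar> \<le> KK a b * (\<bar>lam\<bar> * GG) ^ k / fact k"
proof -
  have "\<bar>lam ^ k * U q a b k x\<bar> = \<bar>lam\<bar> ^ k * \<bar>U q a b k x\<bar>" by (simp add: abs_mult power_abs)
  also have "\<dots> \<le> \<bar>lam\<bar> ^ k * (KK a b * GG ^ k / fact k)" using U_unif[OF x] by (intro mult_left_mono) auto
  finally show "\<bar>lam ^ k * U q a b k x\<bar> \<le> KK a b * (\<bar>lam\<bar> * GG) ^ k / fact k" by (simp add: power_mult_distrib mult_ac)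
  have "\<bar>lam ^ k * dU q a b k x\<bar> = \<bar>lam\<bar> ^ k * \<bar>dU q a b k x\<bar>" by (simp add: abs_mult power_abs)
  also have "\<dots> \<le> \<bar>lam\<bar> ^ k * (KK a b * GG ^ k / fact k)" using dU_unif[OF x] by (intro mult_left_mono) auto
  finally show "\<bar>lam ^ k * dU q a b k x\<bar> \<le> KK a b * (\<bar>lam\<bar> * GG) ^ k / fact k" by (simp add: power_mult_distrib mult_ac)
qed

lemma psi_summable:
  assumes x: "x \<in> {0..l}"
  shows "summable (\<lambda>k. lam ^ k * U q a b k x)" "summable (\<lambda>k. lam ^ k * dU q a b k x)"
proof -
  show "summable (\<lambda>k. lam ^ k * U q a b k x)"
    by (rule summable_comparison_test[OF _ E_summable[of a b "\<bar>lam\<bar>"]]) (use E_bound(1)[OF x] in auto)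
  show "summable (\<lambda>k. lam ^ k * dU q a b k x)"
    by (rule summable_comparison_test[OF _ E_summable[of a b "\<bar>lam\<bar>"]]) (use E_bound(2)[OF x] in auto)
qed

lemma psi_int1:
  assumes x: "x \<in> {0..l}"
  shows "(\<lambda>t. q t * psi q a b lam t) integrable_on {0..x}"
    "dpsi q a b lam x = b - lam * integral {0..x} (\<lambda>t. q t * psi q a b lam t)"
proof -
  let ?B = "\<lambda>k. KK a b * (\<bar>lam\<bar> * GG) ^ k / fact k"
  let ?f = "\<lambda>k t. q t * (lam ^ k * U q a b k t)"
  have cU: "continuous_on {0..l} (\<lambda>t. lam ^ k * U q a b k t)" for k
    using U_cont by (intro continuous_intros) auto
  note SI = series_integral[of ?f "{0..x}" q ?B]
  have prem1: "?f k integrable_on {0..x}" for k using qprod_int[OF cU x] .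
  have prem2: "q integrable_on {0..x}" using q_int_sub[OF x] .
  have Bnn: "0 \<le> ?B k" for k using KK_nn GG_ge1 by (intro divide_nonneg_pos mult_nonneg_nonneg zero_le_power) auto
  have prem3: "\<bar>?f k t\<bar> \<le> q t * ?B k" if t: "t \<in> {0..x}" for k t
  proof -
    have tl: "t \<in> {0..l}" using t x by auto
    have "\<bar>?f k t\<bar> = q t * \<bar>lam ^ k * U q a b k t\<bar>" using q_nn[of t] by (simp add: abs_mult)
    also have "\<dots> \<le> q t * ?B k" using E_bound(1)[OF tl] q_nn[of t] by (intro mult_left_mono) auto
    finally show ?thesis .
  qed
  have prem_h: "\<And>t. t \<in> {0..x} \<Longrightarrow> 0 \<le> q t" using q_nn by auto
  note SI = SI[OF prem1 prem2 prem_h Bnn E_summable prem3]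
  have eqf: "(\<Sum>k. ?f k t) = q t * psi q a b lam t" if t: "t \<in> {0..x}" for t
  proof -
    have tl: "t \<in> {0..l}" using t x by auto
    show ?thesis unfolding psi_def by (rule suminf_mult[OF psi_summable(1)[OF tl]])
  qed
  show "(\<lambda>t. q t * psi q a b lam t) integrable_on {0..x}"
    by (rule iffD1[OF integrable_cong[OF eqf] SI(1)])
  have I: "(\<lambda>k. lam ^ k * integral {0..x} (\<lambda>t. q t * U q a b k t)) sums integral {0..x} (\<lambda>t. q t * psi q a b lam t)"
  proof -
    have "integral {0..x} (\<lambda>t. \<Sum>k. ?f k t) = integral {0..x} (\<lambda>t. q t * psi q a b lam t)"
      by (rule integral_cong) (rule eqf)
    moreover have "(\<lambda>k. integral {0..x} (?f k)) = (\<lambda>k. lam ^ k * integral {0..x} (\<lambda>t. q t * U q a b k t))"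
    proof (rule ext)
      fix k
      have "integral {0..x} (?f k) = integral {0..x} (\<lambda>t. lam ^ k * (q t * U q a b k t))"
        by (rule integral_cong) (simp only: mult.left_commute)
      thus "integral {0..x} (?f k) = lam ^ k * integral {0..x} (\<lambda>t. q t * U q a b k t)"
        by (simp only: integral_mult_right)
    qed
    ultimately show ?thesis using SI(2) by metis
  qed
  let ?g = "\<lambda>k. lam ^ k * dU q a b k x"
  have "(\<lambda>k. ?g (Suc k)) = (\<lambda>k. (- lam) * (lam ^ k * integral {0..x} (\<lambda>t. q t * U q a b k t)))"
    by (simp add: dU_Suc fun_eq_iff)
  hence "(\<lambda>k. ?g (Suc k)) sums (- lam * integral {0..x} (\<lambda>t. q t * psi q a b lam t))"
    using sums_mult[OF I, of "- lam"] by simp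
  hence "?g sums (- lam * integral {0..x} (\<lambda>t. q t * psi q a b lam t) + ?g 0)"
    by (rule sums_Suc_iff[THEN iffD1])
  hence gs: "?g sums (- lam * integral {0..x} (\<lambda>t. q t * psi q a b lam t) + b)" by simp
  show "dpsi q a b lam x = b - lam * integral {0..x} (\<lambda>t. q t * psi q a b lam t)"
    unfolding dpsi_def using sums_unique[OF gs] by simp
qed

lemma psi_int2:
  assumes x: "x \<in> {0..l}"
  shows "dpsi q a b lam integrable_on {0..x}"
    "psi q a b lam x = a + integral {0..x} (dpsi q a b lam)"
proof -
  let ?B = "\<lambda>k. KK a b * (\<bar>lam\<bar> * GG) ^ k / fact k"
  let ?f = "\<lambda>k t. lam ^ k * dU q a b k t"
  have cU: "continuous_on {0..l} (?f k)" for k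
    using U_cont by (intro continuous_intros) auto
  have prem1: "?f k integrable_on {0..x}" for k
    by (rule integrable_subinterval_real[OF integrable_continuous_real[OF cU]]) (use x in auto)
  have prem2: "(\<lambda>_. 1::real) integrable_on {0..x}" by (rule integrable_const_ivl)
  have Bnn: "0 \<le> ?B k" for k using KK_nn GG_ge1 by (intro divide_nonneg_pos mult_nonneg_nonneg zero_le_power) auto
  have prem3: "\<bar>?f k t\<bar> \<le> 1 * ?B k" if t: "t \<in> {0..x}" for k t
    using E_bound(2)[of t] t x by auto
  note SI = series_integral[of ?f "{0..x}" "\<lambda>_. 1" ?B, OF prem1 prem2 _ Bnn E_summable prem3]
  have eq: "(\<lambda>t. \<Sum>k. ?f k t) = dpsi q a b lam" by (simp add: dpsi_def fun_eq_iff)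
  show "dpsi q a b lam integrable_on {0..x}" using SI(1) eq by simp
  have ik: "integral {0..x} (?f k) = lam ^ k * U q a b k x - lam ^ k * U q a b k 0" for k
  proof (cases k)
    case 0 then show ?thesis using x by (simp add: algebra_simps)
  next
    case (Suc m) then show ?thesis by (simp only: integral_mult_right U_Suc' U_at0) simp
  qed
  have s1: "(\<lambda>k. lam ^ k * U q a b k x - lam ^ k * U q a b k 0) sums integral {0..x} (dpsi q a b lam)"
    using SI(2) eq ik by simp
  have s2: "(\<lambda>k. lam ^ k * U q a b k x - lam ^ k * U q a b k 0) sums (psi q a b lam x - psi q a b lam 0)"
    unfolding psi_def
    by (intro sums_diff summable_sums psi_summable(1)) (use x in auto)
  show "psi q a b lam x = a + integral {0..x} (dpsi q a b lam)"
    using sums_unique2[OF s1 s2] psi_at0 by simp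
qed

lemma dpsi_cont: "continuous_on {0..l} (dpsi q a b lam)"
proof -
  have i: "(\<lambda>t. q t * psi q a b lam t) integrable_on {0..l}" using psi_int1(1)[of l] l_pos by auto
  have "continuous_on {0..l} (\<lambda>x. b - lam * integral {0..x} (\<lambda>t. q t * psi q a b lam t))"
    by (intro continuous_intros indefinite_integral_continuous_1 i)
  thus ?thesis by (rule continuous_on_eq) (simp add: psi_int1(2))
qed

lemma psi_deriv:
  assumes x: "x \<in> {0..l}"
  shows "(psi q a b lam has_real_derivative dpsi q a b lam x) (at x within {0..l})"
proof -
  have "((\<lambda>u. integral {0..u} (dpsi q a b lam)) has_vector_derivative dpsi q a b lam x) (at x within {0..l})"
    by (rule integral_has_vector_derivative[OF dpsi_cont x])
  hence "((\<lambda>u. integral {0..u} (dpsi q a b lam)) has_real_derivative dpsi q a b lam x) (at x within {0..l})"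
    by (simp add: has_real_derivative_iff_has_vector_derivative)
  hence "((\<lambda>u. a + integral {0..u} (dpsi q a b lam)) has_real_derivative dpsi q a b lam x) (at x within {0..l})"
    by (intro derivative_eq_intros) auto
  thus ?thesis
    by (rule has_field_derivative_transform_within[where d=1]) (use x psi_int2(2) in auto)
qed

lemma bounded_cont:
  fixes f :: "real \<Rightarrow> real"
  assumes "continuous_on {0..l} f"
  obtains B where "B > 0" "\<And>x. x \<in> {0..l} \<Longrightarrow> \<bar>f x\<bar> \<le> B"
proof -
  have "bounded (f ` {0..l})" using assms by (intro compact_imp_bounded compact_continuous_image) auto
  then obtain B where "\<forall>y\<in>f ` {0..l}. norm y \<le> B" by (auto simp: bounded_iff)
  hence "\<And>x. x \<in> {0..l} \<Longrightarrow> \<bar>f x\<bar> \<le> B" by simp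
  hence "\<And>x. x \<in> {0..l} \<Longrightarrow> \<bar>f x\<bar> \<le> max B 1" by (meson max.coboundedI1)
  thus ?thesis using that[of "max B 1"] by auto
qed

lemma unif_cont:
  fixes f :: "real \<Rightarrow> real"
  assumes "continuous_on {0..l} f" "e > 0"
  obtains d where "d > 0" "\<And>s t. s \<in> {0..l} \<Longrightarrow> t \<in> {0..l} \<Longrightarrow> \<bar>t - s\<bar> < d \<Longrightarrow> \<bar>f t - f s\<bar> < e"
proof -
  have "uniformly_continuous_on {0..l} f" using assms by (intro compact_uniformly_continuous) auto
  thus ?thesis using that assms(2) unfolding uniformly_continuous_on_def dist_real_def by metis
qed

lemma wronsk_step:
  fixes p1 d1 p2 d2 :: "real \<Rightarrow> real"
  assumes zy: "0 \<le> z" "z \<le> y" "y \<le> l"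
    and c: "continuous_on {0..l} p1" "continuous_on {0..l} p2" "continuous_on {0..l} d1" "continuous_on {0..l} d2"
    and eq: "p1 y - p1 z = integral {z..y} d1" "p2 y - p2 z = integral {z..y} d2"
      "d1 y - d1 z = - lam * integral {z..y} (\<lambda>t. q t * p1 t)"
      "d2 y - d2 z = - lam * integral {z..y} (\<lambda>t. q t * p2 t)"
    and B: "\<And>x. x \<in> {0..l} \<Longrightarrow> \<bar>p1 x\<bar> \<le> B \<and> \<bar>p2 x\<bar> \<le> B \<and> \<bar>d1 x\<bar> \<le> B \<and> \<bar>d2 x\<bar> \<le> B"
    and osc: "\<And>t. t \<in> {z..y} \<Longrightarrow> \<bar>p1 t - p1 y\<bar> \<le> \<eta> \<and> \<bar>p2 t - p2 y\<bar> \<le> \<eta> \<and> \<bar>d1 t - d1 z\<bar> \<le> \<eta> \<and> \<bar>d2 t - d2 z\<bar> \<le> \<eta>"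
    and eta: "0 \<le> \<eta>"
  shows "\<bar>(p1 y * d2 y - p2 y * d1 y) - (p1 z * d2 z - p2 z * d1 z)\<bar> \<le> 2 * B * \<eta> * (\<bar>lam\<bar> + 1) * (FF q y - FF q z)"
proof -
  have B0: "0 \<le> B" using B[of 0] l_pos by (auto intro: order_trans[OF abs_ge_zero])
  have sub: "{z..y} \<subseteq> {0..l}" using zy by auto
  have cp: "continuous_on {z..y} f" if "continuous_on {0..l} f" for f :: "real \<Rightarrow> real"
    using continuous_on_subset[OF that sub] .
  have qi: "(\<lambda>t. q t * f t) integrable_on {z..y}" if "continuous_on {0..l} f" for f :: "real \<Rightarrow> real"
  proof -
    have "(\<lambda>t. q t * f t) integrable_on {0..l}" using qprod_int_l[OF that] .
    thus ?thesis by (rule integrable_subinterval_real) (use sub in auto)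
  qed
  have qiz: "q integrable_on {z..y}" by (rule integrable_subinterval_real[OF q_int sub])
  have ci: "f integrable_on {z..y}" if "continuous_on {0..l} f" for f :: "real \<Rightarrow> real"
    by (rule integrable_continuous_real[OF cp[OF that]])
  define X where "X = integral {z..y} (\<lambda>t. q t * (p1 y * (p2 t - p2 y) - p2 y * (p1 t - p1 y)))"
  define Y where "Y = integral {z..y} (\<lambda>t. d2 z * (d1 t - d1 z) - d1 z * (d2 t - d2 z))"
  have cX1: "continuous_on {0..l} (\<lambda>t. p1 y * (p2 t - p2 y) - p2 y * (p1 t - p1 y))"
    using c by (intro continuous_intros)
  have cY1: "continuous_on {0..l} (\<lambda>t. d2 z * (d1 t - d1 z) - d1 z * (d2 t - d2 z))"
    using c by (intro continuous_intros)
  have X_eq: "X = p1 y * integral {z..y} (\<lambda>t. q t * p2 t) - p2 y * integral {z..y} (\<lambda>t. q t * p1 t)"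
  proof -
    have "X = integral {z..y} (\<lambda>t. p1 y * (q t * p2 t) - p2 y * (q t * p1 t))"
      unfolding X_def by (rule integral_cong) (simp add: algebra_simps)
    also have "\<dots> = integral {z..y} (\<lambda>t. p1 y * (q t * p2 t)) - integral {z..y} (\<lambda>t. p2 y * (q t * p1 t))"
      by (rule integral_diff) (intro integrable_on_mult_right qi c)+
    finally show ?thesis by simp
  qed
  have Y_eq: "Y = d2 z * integral {z..y} d1 - d1 z * integral {z..y} d2"
  proof -
    have "Y = integral {z..y} (\<lambda>t. d2 z * d1 t - d1 z * d2 t)"
      unfolding Y_def by (rule integral_cong) (simp add: algebra_simps)
    also have "\<dots> = integral {z..y} (\<lambda>t. d2 z * d1 t) - integral {z..y} (\<lambda>t. d1 z * d2 t)"
      by (rule integral_diff) (intro integrable_on_mult_right ci c)+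
    finally show ?thesis by simp
  qed
  have W_eq: "(p1 y * d2 y - p2 y * d1 y) - (p1 z * d2 z - p2 z * d1 z) = - lam * X + Y"
  proof -
    have "(p1 y * d2 y - p2 y * d1 y) - (p1 z * d2 z - p2 z * d1 z) =
      p1 y * (d2 y - d2 z) + d2 z * (p1 y - p1 z) - p2 y * (d1 y - d1 z) - d1 z * (p2 y - p2 z)"
      by (simp add: algebra_simps)
    also have "\<dots> = - lam * X + Y" unfolding X_eq Y_eq eq by (simp add: algebra_simps)
    finally show ?thesis .
  qed
  have Xb: "norm X \<le> integral {z..y} (\<lambda>t. q t * (2 * B * \<eta>))"
    unfolding X_def
  proof (rule integral_norm_bound_integral)
    show "(\<lambda>t. q t * (p1 y * (p2 t - p2 y) - p2 y * (p1 t - p1 y))) integrable_on {z..y}" by (rule qi[OF cX1])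
    show "(\<lambda>t. q t * (2 * B * \<eta>)) integrable_on {z..y}" by (intro integrable_on_mult_left qiz)
    fix t assume t: "t \<in> {z..y}"
    have tl: "t \<in> {0..l}" and yl: "y \<in> {0..l}" using t zy by auto
    have "\<bar>p1 y * (p2 t - p2 y) - p2 y * (p1 t - p1 y)\<bar> \<le> \<bar>p1 y\<bar> * \<bar>p2 t - p2 y\<bar> + \<bar>p2 y\<bar> * \<bar>p1 t - p1 y\<bar>"
      by (simp add: abs_mult[symmetric] abs_triangle_ineq4)
    also have "\<dots> \<le> B * \<eta> + B * \<eta>"
      using B[OF yl] osc[OF t] B0 by (intro add_mono mult_mono) auto
    finally have "\<bar>p1 y * (p2 t - p2 y) - p2 y * (p1 t - p1 y)\<bar> \<le> 2 * B * \<eta>" by simp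
    thus "norm (q t * (p1 y * (p2 t - p2 y) - p2 y * (p1 t - p1 y))) \<le> q t * (2 * B * \<eta>)"
      using q_nn[of t] by (simp add: abs_mult mult_left_mono)
  qed
  have Yb: "norm Y \<le> integral {z..y} (\<lambda>t. 2 * B * \<eta>)"
    unfolding Y_def
  proof (rule integral_norm_bound_integral)
    show "(\<lambda>t. d2 z * (d1 t - d1 z) - d1 z * (d2 t - d2 z)) integrable_on {z..y}" by (rule ci[OF cY1])
    show "(\<lambda>t. 2 * B * \<eta>) integrable_on {z..y}" by (rule integrable_const_ivl)
    fix t assume t: "t \<in> {z..y}"
    have zl: "z \<in> {0..l}" using zy by auto
    have "\<bar>d2 z * (d1 t - d1 z) - d1 z * (d2 t - d2 z)\<bar> \<le> \<bar>d2 z\<bar> * \<bar>d1 t - d1 z\<bar> + \<bar>d1 z\<bar> * \<bar>d2 t - d2 z\<bar>"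
      by (simp add: abs_mult[symmetric] abs_triangle_ineq4)
    also have "\<dots> \<le> B * \<eta> + B * \<eta>"
      using B[OF zl] osc[OF t] B0 by (intro add_mono mult_mono) auto
    finally show "norm (d2 z * (d1 t - d1 z) - d1 z * (d2 t - d2 z)) \<le> 2 * B * \<eta>" by simp
  qed
  have Iq: "integral {z..y} (\<lambda>t. q t * (2 * B * \<eta>)) = 2 * B * \<eta> * integral {z..y} q" by simp
  have Ic: "integral {z..y} (\<lambda>t. 2 * B * \<eta>) = 2 * B * \<eta> * (y - z)" using zy by simp
  have Fd: "FF q y - FF q z = (y - z) + integral {z..y} q"
  proof -
    have "integral {z..y} (\<lambda>t. 1 + q t) = integral {z..y} (\<lambda>t. 1) + integral {z..y} q"
      by (rule integral_add) (auto simp: qiz)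
    thus ?thesis using FF_diff[OF zy] zy by simp
  qed
  have qnn: "0 \<le> integral {z..y} q" using qiz q_nn by (intro integral_nonneg) auto
  have "\<bar>- lam * X + Y\<bar> \<le> \<bar>lam\<bar> * \<bar>X\<bar> + \<bar>Y\<bar>"
    using abs_triangle_ineq[of "- lam * X" Y] by (simp add: abs_mult)
  also have "\<dots> \<le> \<bar>lam\<bar> * (2 * B * \<eta> * integral {z..y} q) + 2 * B * \<eta> * (y - z)"
  proof -
    have "\<bar>X\<bar> \<le> 2 * B * \<eta> * integral {z..y} q" using Xb Iq by (simp only: real_norm_def)
    moreover have "\<bar>Y\<bar> \<le> 2 * B * \<eta> * (y - z)" using Yb Ic by (simp only: real_norm_def)
    ultimately show ?thesis by (intro add_mono mult_left_mono) auto
  qed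
  also have "\<dots> \<le> 2 * B * \<eta> * (\<bar>lam\<bar> + 1) * (FF q y - FF q z)"
  proof -
    have "0 \<le> 2 * B * \<eta>" using B0 eta by simp
    hence "0 \<le> 2 * B * \<eta> * (\<bar>lam\<bar> * (y - z) + integral {z..y} q)" using zy qnn by simp
    thus ?thesis unfolding Fd by (simp add: algebra_simps)
  qed
  finally show ?thesis unfolding W_eq .
qed

lemma psi_cont: "continuous_on {0..l} (psi q a b lam)"
proof -
  have i: "dpsi q a b lam integrable_on {0..l}" using psi_int2(1)[of l] l_pos by auto
  have "continuous_on {0..l} (\<lambda>x. a + integral {0..x} (dpsi q a b lam))"
    by (intro continuous_intros indefinite_integral_continuous_1 i)
  thus ?thesis by (rule continuous_on_eq) (simp add: psi_int2(2))
qed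

lemma psi_diff:
  assumes zy: "0 \<le> z" "z \<le> y" "y \<le> l"
  shows "psi q a b lam y - psi q a b lam z = integral {z..y} (dpsi q a b lam)"
    "dpsi q a b lam y - dpsi q a b lam z = - lam * integral {z..y} (\<lambda>t. q t * psi q a b lam t)"
proof -
  have i: "dpsi q a b lam integrable_on {0..l}" using psi_int2(1)[of l] l_pos by auto
  have i2: "(\<lambda>t. q t * psi q a b lam t) integrable_on {0..l}" using psi_int1(1)[of l] l_pos by auto
  show "psi q a b lam y - psi q a b lam z = integral {z..y} (dpsi q a b lam)"
    using psi_int2(2)[of y] psi_int2(2)[of z] int_split[OF i zy] zy by simp
  show "dpsi q a b lam y - dpsi q a b lam z = - lam * integral {z..y} (\<lambda>t. q t * psi q a b lam t)"
  proof -
    have "dpsi q a b lam y - dpsi q a b lam z = - lam * (integral {0..y} (\<lambda>t. q t * psi q a b lam t) - integral {0..z} (\<lambda>t. q t * psi q a b lam t))"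
      using psi_int1(2)[of y a b lam] psi_int1(2)[of z a b lam] zy by (simp add: algebra_simps)
    thus ?thesis using int_split[OF i2 zy] by simp
  qed
qed

lemma wronskian:
  "psi q 1 0 lam l * dpsi q 0 1 lam l - psi q 0 1 lam l * dpsi q 1 0 lam l = 1"
proof -
  define p1 where "p1 = psi q 1 0 lam"
  define p2 where "p2 = psi q 0 1 lam"
  define d1 where "d1 = dpsi q 1 0 lam"
  define d2 where "d2 = dpsi q 0 1 lam"
  define W where "W x = p1 x * d2 x - p2 x * d1 x" for x
  have c: "continuous_on {0..l} p1" "continuous_on {0..l} p2" "continuous_on {0..l} d1" "continuous_on {0..l} d2"
    unfolding p1_def p2_def d1_def d2_def by (rule psi_cont dpsi_cont)+
  obtain B1 where B1: "B1 > 0" "\<And>x. x \<in> {0..l} \<Longrightarrow> \<bar>p1 x\<bar> \<le> B1" using bounded_cont[OF c(1)] by blast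
  obtain B2 where B2: "B2 > 0" "\<And>x. x \<in> {0..l} \<Longrightarrow> \<bar>p2 x\<bar> \<le> B2" using bounded_cont[OF c(2)] by blast
  obtain B3 where B3: "B3 > 0" "\<And>x. x \<in> {0..l} \<Longrightarrow> \<bar>d1 x\<bar> \<le> B3" using bounded_cont[OF c(3)] by blast
  obtain B4 where B4: "B4 > 0" "\<And>x. x \<in> {0..l} \<Longrightarrow> \<bar>d2 x\<bar> \<le> B4" using bounded_cont[OF c(4)] by blast
  define B where "B = max (max B1 B2) (max B3 B4)"
  have Bp: "B > 0" using B1 by (simp add: B_def)
  have Bb: "\<And>x. x \<in> {0..l} \<Longrightarrow> \<bar>p1 x\<bar> \<le> B \<and> \<bar>p2 x\<bar> \<le> B \<and> \<bar>d1 x\<bar> \<le> B \<and> \<bar>d2 x\<bar> \<le> B"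
    using B1 B2 B3 B4 unfolding B_def by (meson max.coboundedI1 max.coboundedI2)
  have H: "\<exists>d>0. \<forall>z y. 0 \<le> z \<longrightarrow> z \<le> y \<longrightarrow> y \<le> l \<longrightarrow> y - z < d \<longrightarrow> \<bar>W y - W z\<bar> \<le> e * (FF q y - FF q z)"
    if e: "e > 0" for e
  proof -
    define \<eta> where "\<eta> = e / (2 * B * (\<bar>lam\<bar> + 1))"
    have eta: "\<eta> > 0" using e Bp by (simp add: \<eta>_def)
    obtain a1 where a1: "a1 > 0" "\<And>s t. s \<in> {0..l} \<Longrightarrow> t \<in> {0..l} \<Longrightarrow> \<bar>t - s\<bar> < a1 \<Longrightarrow> \<bar>p1 t - p1 s\<bar> < \<eta>"
      using unif_cont[OF c(1) eta] by blast
    obtain a2 where a2: "a2 > 0" "\<And>s t. s \<in> {0..l} \<Longrightarrow> t \<in> {0..l} \<Longrightarrow> \<bar>t - s\<bar> < a2 \<Longrightarrow> \<bar>p2 t - p2 s\<bar> < \<eta>"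
      using unif_cont[OF c(2) eta] by blast
    obtain a3 where a3: "a3 > 0" "\<And>s t. s \<in> {0..l} \<Longrightarrow> t \<in> {0..l} \<Longrightarrow> \<bar>t - s\<bar> < a3 \<Longrightarrow> \<bar>d1 t - d1 s\<bar> < \<eta>"
      using unif_cont[OF c(3) eta] by blast
    obtain a4 where a4: "a4 > 0" "\<And>s t. s \<in> {0..l} \<Longrightarrow> t \<in> {0..l} \<Longrightarrow> \<bar>t - s\<bar> < a4 \<Longrightarrow> \<bar>d2 t - d2 s\<bar> < \<eta>"
      using unif_cont[OF c(4) eta] by blast
    define d where "d = min (min a1 a2) (min a3 a4)"
    have dp: "d > 0" using a1 a2 a3 a4 by (simp add: d_def)
    show ?thesis
    proof (intro exI[of _ d] conjI dp allI impI)
      fix z y assume zy: "0 \<le> z" "z \<le> y" "y \<le> l" "y - z < d"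
      have osc: "\<bar>p1 t - p1 y\<bar> \<le> \<eta> \<and> \<bar>p2 t - p2 y\<bar> \<le> \<eta> \<and> \<bar>d1 t - d1 z\<bar> \<le> \<eta> \<and> \<bar>d2 t - d2 z\<bar> \<le> \<eta>"
        if t: "t \<in> {z..y}" for t
      proof -
        have tl: "t \<in> {0..l}" "y \<in> {0..l}" "z \<in> {0..l}" using t zy by auto
        have "\<bar>t - y\<bar> < d" "\<bar>t - z\<bar> < d" using t zy by auto
        hence "\<bar>t - y\<bar> < a1" "\<bar>t - y\<bar> < a2" "\<bar>t - z\<bar> < a3" "\<bar>t - z\<bar> < a4" by (auto simp: d_def)
        thus ?thesis using a1(2)[OF tl(2,1)] a2(2)[OF tl(2,1)] a3(2)[OF tl(3,1)] a4(2)[OF tl(3,1)] by auto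
      qed
      have "\<bar>W y - W z\<bar> \<le> 2 * B * \<eta> * (\<bar>lam\<bar> + 1) * (FF q y - FF q z)"
        unfolding W_def
        by (rule wronsk_step[OF zy(1-3) c]) (use psi_diff[OF zy(1-3)] Bb osc eta in \<open>auto simp: p1_def p2_def d1_def d2_def\<close>)
      also have "2 * B * \<eta> * (\<bar>lam\<bar> + 1) = e" using Bp by (simp add: \<eta>_def)
      finally show "\<bar>W y - W z\<bar> \<le> e * (FF q y - FF q z)" .
    qed
  qed
  have "W l = W 0"
    by (rule GL_abs[where F="FF q"]) (use l_pos H in auto)
  thus ?thesis by (simp add: W_def p1_def p2_def d1_def d2_def psi_at0 dpsi_at0)
qed

lemma Fc_sums:
  "(\<lambda>k. complex_of_real (U q a b k l) * z ^ k) sums Fc q a b l z"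
  "(\<lambda>k. complex_of_real (dU q a b k l) * z ^ k) sums dFc q a b l z"
proof -
  have ll: "l \<in> {0..l}" using l_pos by auto
  have "summable (\<lambda>k. complex_of_real (U q a b k l) * z ^ k)"
  proof (rule summable_comparison_test[OF _ E_summable[of a b "cmod z"]], intro exI allI impI)
    fix k :: nat
    have "norm (complex_of_real (U q a b k l) * z ^ k) = \<bar>U q a b k l\<bar> * cmod z ^ k" by (simp add: norm_mult norm_power)
    also have "\<dots> \<le> (KK a b * GG ^ k / fact k) * cmod z ^ k" using U_unif[OF ll] by (intro mult_right_mono) auto
    also have "\<dots> = KK a b * (cmod z * GG) ^ k / fact k" by (simp add: power_mult_distrib field_simps)
    finally show "norm (complex_of_real (U q a b k l) * z ^ k) \<le> KK a b * (cmod z * GG) ^ k / fact k" .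
  qed
  thus "(\<lambda>k. complex_of_real (U q a b k l) * z ^ k) sums Fc q a b l z"
    unfolding Fc_def by (rule summable_sums)
  have "summable (\<lambda>k. complex_of_real (dU q a b k l) * z ^ k)"
  proof (rule summable_comparison_test[OF _ E_summable[of a b "cmod z"]], intro exI allI impI)
    fix k :: nat
    have "norm (complex_of_real (dU q a b k l) * z ^ k) = \<bar>dU q a b k l\<bar> * cmod z ^ k" by (simp add: norm_mult norm_power)
    also have "\<dots> \<le> (KK a b * GG ^ k / fact k) * cmod z ^ k" using dU_unif[OF ll] by (intro mult_right_mono) auto
    also have "\<dots> = KK a b * (cmod z * GG) ^ k / fact k" by (simp add: power_mult_distrib field_simps)
    finally show "norm (complex_of_real (dU q a b k l) * z ^ k) \<le> KK a b * (cmod z * GG) ^ k / fact k" .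
  qed
  thus "(\<lambda>k. complex_of_real (dU q a b k l) * z ^ k) sums dFc q a b l z"
    unfolding dFc_def by (rule summable_sums)
qed

lemma Fc_holo: "Fc q a b l holomorphic_on UNIV" "dFc q a b l holomorphic_on UNIV"
proof -
  have "Fc q a b l analytic_on ball 0 R" for R
    by (rule power_series_analytic) (use Fc_sums(1) in simp)
  hence "Fc q a b l holomorphic_on ball 0 R" for R by (simp add: analytic_imp_holomorphic)
  thus "Fc q a b l holomorphic_on UNIV"
    by (rule entire_from_balls)
  have "dFc q a b l analytic_on ball 0 R" for R
    by (rule power_series_analytic) (use Fc_sums(2) in simp)
  hence "dFc q a b l holomorphic_on ball 0 R" for R by (simp add: analytic_imp_holomorphic)
  thus "dFc q a b l holomorphic_on UNIV"
    by (rule entire_from_balls)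
qed

lemma Fc_real:
  "Fc q a b l (complex_of_real lam) = complex_of_real (psi q a b lam l)"
  "dFc q a b l (complex_of_real lam) = complex_of_real (dpsi q a b lam l)"
proof -
  have ll: "l \<in> {0..l}" using l_pos by auto
  have "(\<lambda>k. complex_of_real (lam ^ k * U q a b k l)) sums complex_of_real (psi q a b lam l)"
    unfolding psi_def by (intro sums_of_real summable_sums psi_summable(1)[OF ll])
  hence "(\<lambda>k. complex_of_real (U q a b k l) * complex_of_real lam ^ k) sums complex_of_real (psi q a b lam l)"
    by (simp add: mult.commute)
  thus "Fc q a b l (complex_of_real lam) = complex_of_real (psi q a b lam l)"
    using sums_unique2[OF Fc_sums(1)] by blast
  have "(\<lambda>k. complex_of_real (lam ^ k * dU q a b k l)) sums complex_of_real (dpsi q a b lam l)"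
    unfolding dpsi_def by (intro sums_of_real summable_sums psi_summable(2)[OF ll])
  hence "(\<lambda>k. complex_of_real (dU q a b k l) * complex_of_real lam ^ k) sums complex_of_real (dpsi q a b lam l)"
    by (simp add: mult.commute)
  thus "dFc q a b l (complex_of_real lam) = complex_of_real (dpsi q a b lam l)"
    using sums_unique2[OF Fc_sums(2)] by blast
qed

lemma psi_solution:
  assumes qn: "\<And>t. q t = (n t)\<^sup>2"
  shows "is_solution n l \<nu> (psi q a b (\<nu>\<^sup>2)) (dpsi q a b (\<nu>\<^sup>2))"
  unfolding is_solution_def
proof (intro conjI ballI)
  fix x assume x: "x \<in> {0..l}"
  show "(psi q a b (\<nu>\<^sup>2) has_real_derivative dpsi q a b (\<nu>\<^sup>2) x) (at x within {0..l})"
    by (rule psi_deriv[OF x])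
  have i: "(\<lambda>t. q t * psi q a b (\<nu>\<^sup>2) t) integrable_on {0..x}" by (rule psi_int1(1)[OF x])
  have "((\<lambda>t. (- (\<nu>\<^sup>2)) * (q t * psi q a b (\<nu>\<^sup>2) t)) has_integral
          (- (\<nu>\<^sup>2)) * integral {0..x} (\<lambda>t. q t * psi q a b (\<nu>\<^sup>2) t)) {0..x}"
    by (intro has_integral_mult_right integrable_integral i)
  moreover have "(- (\<nu>\<^sup>2)) * integral {0..x} (\<lambda>t. q t * psi q a b (\<nu>\<^sup>2) t) = dpsi q a b (\<nu>\<^sup>2) x - dpsi q a b (\<nu>\<^sup>2) 0"
    using psi_int1(2)[OF x] dpsi_at0 by simp
  ultimately show "((\<lambda>t. - (\<nu>\<^sup>2 * (n t)\<^sup>2 * psi q a b (\<nu>\<^sup>2) t)) has_integral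
          (dpsi q a b (\<nu>\<^sup>2) x - dpsi q a b (\<nu>\<^sup>2) 0)) {0..x}"
    by (simp add: qn mult_ac)
qed

end




lemma two_ne_one: "(2::2) \<noteq> 1" by simp

lemma vec2_nth[simp]: "vec2 a b $ 1 = a" "vec2 a b $ 2 = b"
  by (simp_all add: vec2_def)

lemma trace2: "trace (A :: real^2^2) = A$1$1 + A$2$2"
  by (simp add: trace_def sum_2)

lemma mv2: "(A :: real^2^2) *v vec2 a b = vec2 (A$1$1 * a + A$1$2 * b) (A$2$1 * a + A$2$2 * b)"
  by (simp add: vec_eq_iff forall_2 matrix_vector_mult_def sum_2)

lemma sinc_sums: "(\<lambda>n. complex_of_real (sin_coeff (n+1)) * (w - 0)^n) sums sinc w"
proof (cases "w = 0")
  case True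
  have "(\<lambda>n. complex_of_real (sin_coeff (n+1)) * (w - 0)^n) = (\<lambda>n. if n = 0 then 1 else 0)"
    using True by (auto simp: fun_eq_iff sin_coeff_def)
  thus ?thesis using True sums_single[of 0 "\<lambda>_. 1::complex"] by (simp add: sinc_def)
next
  case False
  thus ?thesis using sin_z_over_z_series'[OF False] by (simp add: sinc_def scaleR_conv_of_real)
qed

lemma sinc_holo: "sinc holomorphic_on ball 0 R"
  using power_series_analytic[of 0 R "\<lambda>n. complex_of_real (sin_coeff (n+1))" sinc] sinc_sums
  by (simp add: analytic_imp_holomorphic)

lemma sinc_0: "sinc 0 = 1" by (simp add: sinc_def)

lemma sin_sq_sinc: "sin w ^ 2 = sinc w * (w * sin w)"
  by (cases "w = 0") (simp_all add: sinc_def power2_eq_square)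

definition Dmat :: "complex \<Rightarrow> complex \<Rightarrow> complex \<Rightarrow> complex \<Rightarrow> complex \<Rightarrow> complex \<Rightarrow> complex \<Rightarrow> complex \<Rightarrow> complex^2^2" where
  "Dmat \<alpha> \<beta> \<gamma> \<delta> c s x y = (\<chi> i j. if i = 1 then (if j = 1 then (\<alpha> - c) * x + \<beta> * y else s * x)
                                 else (if j = 1 then \<gamma> * x + (\<delta> - c) * y else s * y))"

definition Mmat :: "complex \<Rightarrow> complex \<Rightarrow> complex \<Rightarrow> complex \<Rightarrow> complex^2^2" where
  "Mmat \<alpha> \<beta> \<gamma> \<delta> = (\<chi> i j. if i = 1 then (if j = 1 then \<alpha> else \<beta>) else (if j = 1 then \<gamma> else \<delta>))"

lemma Dmat_det: "det (Dmat \<alpha> \<beta> \<gamma> \<delta> c s x y) = s * (\<beta> * y^2 - \<gamma> * x^2 + (\<alpha> - \<delta>) * x * y)"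
  by (simp add: det_2 Dmat_def algebra_simps power2_eq_square)

lemma conj_normal:
  assumes tr: "\<alpha> + \<delta> = 2 * cos w" and dt: "\<alpha> * \<delta> - \<beta> * \<gamma> = 1"
    and dz: "det (Dmat \<alpha> \<beta> \<gamma> \<delta> (cos w) (sinc w) x y) \<noteq> 0"
  shows "matrix_inv (Dmat \<alpha> \<beta> \<gamma> \<delta> (cos w) (sinc w) x y) ** Mmat \<alpha> \<beta> \<gamma> \<delta> ** Dmat \<alpha> \<beta> \<gamma> \<delta> (cos w) (sinc w) x y
         = normal_form w"
proof -
  let ?D = "Dmat \<alpha> \<beta> \<gamma> \<delta> (cos w) (sinc w) x y"
  let ?M = "Mmat \<alpha> \<beta> \<gamma> \<delta>"
  have inv: "invertible ?D" using dz by (simp add: invertible_det_nz)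
  have left: "matrix_inv ?D ** ?D = mat 1"
    using inv unfolding invertible_def matrix_inv_def by (rule someI_ex[THEN conjunct2])
  have s1: "sin w ^ 2 + cos w ^ 2 = 1" by simp
  have s2: "sin w ^ 2 = sinc w * (w * sin w)" by (rule sin_sq_sinc)
  have MD: "?M ** ?D = ?D ** normal_form w"
  proof -
    have e11: "\<alpha> * ((\<alpha> - cos w) * x + \<beta> * y) + \<beta> * (\<gamma> * x + (\<delta> - cos w) * y)
           = ((\<alpha> - cos w) * x + \<beta> * y) * cos w + sinc w * x * (- w * sin w)"
      using tr dt s1 s2 by algebra
    have e21: "\<gamma> * ((\<alpha> - cos w) * x + \<beta> * y) + \<delta> * (\<gamma> * x + (\<delta> - cos w) * y)
           = (\<gamma> * x + (\<delta> - cos w) * y) * cos w + sinc w * y * (- w * sin w)"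
      using tr dt s1 s2 by algebra
    have e12: "\<alpha> * (sinc w * x) + \<beta> * (sinc w * y) = ((\<alpha> - cos w) * x + \<beta> * y) * sinc w + sinc w * x * cos w"
      by (simp add: algebra_simps)
    have e22: "\<gamma> * (sinc w * x) + \<delta> * (sinc w * y) = (\<gamma> * x + (\<delta> - cos w) * y) * sinc w + sinc w * y * cos w"
      by (simp add: algebra_simps)
    show ?thesis
      using e11 e21 e12 e22
      by (simp add: vec_eq_iff forall_2 matrix_matrix_mult_def sum_2 Dmat_def Mmat_def normal_form_def)
  qed
  have "matrix_inv ?D ** ?M ** ?D = matrix_inv ?D ** (?M ** ?D)" by (simp add: matrix_mul_assoc)
  also have "\<dots> = (matrix_inv ?D ** ?D) ** normal_form w" by (simp add: MD matrix_mul_assoc)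
  also have "\<dots> = normal_form w" by (simp add: left)
  finally show ?thesis .
qed




lemma cont_ev:
  assumes "continuous (at x) f" "open T" "f x \<in> T"
  shows "eventually (\<lambda>y. f y \<in> T) (nhds x)"
proof -
  obtain S where "open S" "x \<in> S" "\<forall>x'\<in>S. f x' \<in> T" using assms continuous_at_open by metis
  thus ?thesis unfolding eventually_nhds by blast
qed

lemma cont_ball:
  fixes f :: "'a::metric_space \<Rightarrow> 'b::topological_space"
  assumes "continuous (at x) f" "open T" "f x \<in> T"
  obtains r where "r > 0" "\<And>y. y \<in> ball x r \<Longrightarrow> f y \<in> T"
proof -
  have "eventually (\<lambda>y. f y \<in> T) (nhds x)" by (rule cont_ev[OF assms])
  then obtain d where "d > 0" "\<And>y. dist y x < d \<Longrightarrow> f y \<in> T"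
    unfolding eventually_nhds_metric by blast
  thus ?thesis using that[of d] by (auto simp: dist_commute)
qed

lemma vd_comp:
  assumes "E holomorphic_on UNIV"
  shows "((\<lambda>\<nu>. E (complex_of_real (\<nu>\<^sup>2))) has_vector_derivative
           (complex_of_real (2 * \<nu>0) * deriv E (complex_of_real (\<nu>0\<^sup>2)))) (at \<nu>0)"
proof -
  have f: "((\<lambda>\<nu>. complex_of_real (\<nu>\<^sup>2)) has_vector_derivative complex_of_real (2 * \<nu>0)) (at \<nu>0)"
    by (rule has_vector_derivative_of_real) (auto intro!: derivative_eq_intros)
  have g: "(E has_field_derivative deriv E (complex_of_real (\<nu>0\<^sup>2))) (at (complex_of_real (\<nu>0\<^sup>2)))"
    using holomorphic_derivI[OF assms open_UNIV] by simp
  show ?thesis using field_vector_diff_chain_at[OF f g] by (simp add: o_def)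
qed




lemma quad_one:
  fixes a d :: real
  assumes "a + d = 2" "a * d = 1"
  shows "a = 1 \<and> d = 1"
proof -
  have d: "d = 2 - a" using assms(1) by simp
  have "(a - 1)^2 = 0" using assms(2) unfolding d by (simp add: power2_eq_square algebra_simps)
  thus ?thesis using d by simp
qed

theorem proposition1:
  fixes n :: "real \<Rightarrow> real" and l :: real
    and M :: "real \<Rightarrow> real^2^2" and \<nu>0 :: real and \<omega> :: "real \<Rightarrow> complex"
  assumes l_pos: "l > 0"
    and n_pos: "\<And>x. n x > 0"
    and n_periodic: "\<And>x. n (x + l) = n x"
    and n_integrable: "(\<lambda>x. (n x)\<^sup>2) integrable_on {0..l}"
    and M_transfer: "\<And>\<nu>. is_transfer_matrix n l \<nu> (M \<nu>)"
    and edge: "nondegenerate_band_edge M \<nu>0"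
    and \<omega>_cont: "continuous (at \<nu>0) \<omega>"
    and \<omega>_edge: "\<omega> \<nu>0 = 0"
    and \<omega>_cos: "\<forall>\<^sub>F \<nu> in nhds \<nu>0. cos (\<omega> \<nu>) = complex_of_real (trace (M \<nu>)) / 2"
  shows "\<exists>D :: complex \<Rightarrow> complex^2^2. \<exists>r>0.
           (\<forall>i j. (\<lambda>w. D w $ i $ j) analytic_on ball 0 r) \<and>
           (\<forall>w\<in>ball 0 r. det (D w) \<noteq> 0) \<and>
           (\<forall>\<^sub>F \<nu> in nhds \<nu>0. \<omega> \<nu> \<in> ball 0 r \<and>
              matrix_inv (D (\<omega> \<nu>)) ** cmat (M \<nu>) ** D (\<omega> \<nu>) = normal_form (\<omega> \<nu>))"
proof -
  define q where "q = (\<lambda>x. (n x)\<^sup>2)"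
  have qnn: "\<And>x. 0 \<le> q x" by (simp add: q_def)
  have qint: "q integrable_on {0..l}" using n_integrable by (simp add: q_def)
  note ctx = l_pos qnn qint
  have Ment: "M \<nu> $1$1 = psi q 1 0 (\<nu>\<^sup>2) l \<and> M \<nu> $2$1 = dpsi q 1 0 (\<nu>\<^sup>2) l \<and>
              M \<nu> $1$2 = psi q 0 1 (\<nu>\<^sup>2) l \<and> M \<nu> $2$2 = dpsi q 0 1 (\<nu>\<^sup>2) l" for \<nu>
  proof -
    have s1: "is_solution n l \<nu> (psi q 1 0 (\<nu>\<^sup>2)) (dpsi q 1 0 (\<nu>\<^sup>2))"
      by (rule psi_solution[OF ctx]) (simp add: q_def)
    have s2: "is_solution n l \<nu> (psi q 0 1 (\<nu>\<^sup>2)) (dpsi q 0 1 (\<nu>\<^sup>2))"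
      by (rule psi_solution[OF ctx]) (simp add: q_def)
    have e1: "vec2 (psi q 1 0 (\<nu>\<^sup>2) l) (dpsi q 1 0 (\<nu>\<^sup>2) l) = M \<nu> *v vec2 1 0"
      using M_transfer[of \<nu>] s1 unfolding is_transfer_matrix_def by (simp add: psi_at0 dpsi_at0)
    have e2: "vec2 (psi q 0 1 (\<nu>\<^sup>2) l) (dpsi q 0 1 (\<nu>\<^sup>2) l) = M \<nu> *v vec2 0 1"
      using M_transfer[of \<nu>] s2 unfolding is_transfer_matrix_def by (simp add: psi_at0 dpsi_at0)
    show ?thesis using e1 e2 unfolding mv2 by (simp add: vec_eq_iff forall_2)
  qed
  have Mdet: "M \<nu> $1$1 * M \<nu> $2$2 - M \<nu> $1$2 * M \<nu> $2$1 = 1" for \<nu>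
    using wronskian[OF ctx, of "\<nu>\<^sup>2"] Ment[of \<nu>] by simp
  define A where "A = Fc q 1 0 l"
  define Bf where "Bf = Fc q 0 1 l"
  define Cf where "Cf = dFc q 1 0 l"
  define Df where "Df = dFc q 0 1 l"
  have holo: "A holomorphic_on UNIV" "Bf holomorphic_on UNIV" "Cf holomorphic_on UNIV" "Df holomorphic_on UNIV"
    unfolding A_def Bf_def Cf_def Df_def by (rule Fc_holo[OF ctx])+
  have Ereal: "A (of_real (\<nu>\<^sup>2)) = of_real (M \<nu> $1$1)" "Bf (of_real (\<nu>\<^sup>2)) = of_real (M \<nu> $1$2)"
    "Cf (of_real (\<nu>\<^sup>2)) = of_real (M \<nu> $2$1)" "Df (of_real (\<nu>\<^sup>2)) = of_real (M \<nu> $2$2)" for \<nu>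
    unfolding A_def Bf_def Cf_def Df_def using Fc_real[OF ctx] Ment[of \<nu>] by (simp_all del: of_real_power)
  define \<tau> where "\<tau> z = A z + Df z" for z
  have \<tau>holo: "\<tau> holomorphic_on UNIV" unfolding \<tau>_def[abs_def] using holo by (intro holomorphic_intros)
  have \<tau>real: "\<tau> (of_real (\<nu>\<^sup>2)) = of_real (trace (M \<nu>))" for \<nu>
    by (simp add: \<tau>_def Ereal trace2 del: of_real_power)
  obtain d where dd: "((\<lambda>\<nu>. trace (M \<nu>)) has_real_derivative d) (at \<nu>0)" "d \<noteq> 0"
    using edge unfolding nondegenerate_band_edge_def by blast
  have tr0: "trace (M \<nu>0) = 2"
  proof -
    have "cos (\<omega> \<nu>0) = complex_of_real (trace (M \<nu>0)) / 2"
      using \<omega>_cos by (simp add: eventually_nhds_conv_at)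
    hence "complex_of_real (trace (M \<nu>0)) = complex_of_real 2" using \<omega>_edge by simp
    thus ?thesis by (simp only: of_real_eq_iff)
  qed
  define lc where "lc = complex_of_real (\<nu>0\<^sup>2)"
  have vtr: "((\<lambda>\<nu>. complex_of_real (trace (M \<nu>))) has_vector_derivative complex_of_real d) (at \<nu>0)"
    by (rule has_vector_derivative_of_real[OF dd(1)])
  have vtr2: "((\<lambda>\<nu>. complex_of_real (trace (M \<nu>))) has_vector_derivative
       (complex_of_real (2 * \<nu>0) * deriv \<tau> lc)) (at \<nu>0)"
    using vd_comp[OF \<tau>holo, of \<nu>0] unfolding \<tau>real lc_def .
  have dnz: "deriv \<tau> lc \<noteq> 0"
    using vector_derivative_unique_at[OF vtr vtr2] dd(2) by auto
  have bc: "M \<nu>0 $1$2 \<noteq> 0 \<or> M \<nu>0 $2$1 \<noteq> 0"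
  proof (rule ccontr)
    assume "\<not> (M \<nu>0 $1$2 \<noteq> 0 \<or> M \<nu>0 $2$1 \<noteq> 0)"
    hence b0: "M \<nu>0 $1$2 = 0" and c0: "M \<nu>0 $2$1 = 0" by auto
    have t: "M \<nu>0 $1$1 + M \<nu>0 $2$2 = 2" using tr0 unfolding trace2 .
    have p: "M \<nu>0 $1$1 * M \<nu>0 $2$2 = 1" using Mdet[of \<nu>0] unfolding b0 c0 by simp
    obtain a1: "M \<nu>0 $1$1 = 1" and d1: "M \<nu>0 $2$2 = 1" using quad_one[OF t p] by blast
    define e where "e i j \<nu> = complex_of_real (M \<nu> $ i $ j)" for i j \<nu>
    have ve: "((\<lambda>\<nu>. e 1 1 \<nu>) has_vector_derivative (complex_of_real (2 * \<nu>0) * deriv A lc)) (at \<nu>0)"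
      "((\<lambda>\<nu>. e 1 2 \<nu>) has_vector_derivative (complex_of_real (2 * \<nu>0) * deriv Bf lc)) (at \<nu>0)"
      "((\<lambda>\<nu>. e 2 1 \<nu>) has_vector_derivative (complex_of_real (2 * \<nu>0) * deriv Cf lc)) (at \<nu>0)"
      "((\<lambda>\<nu>. e 2 2 \<nu>) has_vector_derivative (complex_of_real (2 * \<nu>0) * deriv Df lc)) (at \<nu>0)"
      using vd_comp[OF holo(1), of \<nu>0] vd_comp[OF holo(2), of \<nu>0] vd_comp[OF holo(3), of \<nu>0] vd_comp[OF holo(4), of \<nu>0]
      unfolding Ereal e_def lc_def by simp_all
    have feq: "(\<lambda>\<nu>. complex_of_real (trace (M \<nu>))) = (\<lambda>\<nu>. 2 + e 1 2 \<nu> * e 2 1 \<nu> - (e 1 1 \<nu> - 1) * (e 2 2 \<nu> - 1))"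
    proof (rule ext)
      fix \<nu>
      have "trace (M \<nu>) = 2 + M \<nu> $1$2 * M \<nu> $2$1 - (M \<nu> $1$1 - 1) * (M \<nu> $2$2 - 1)"
        using Mdet[of \<nu>] unfolding trace2 by (simp add: algebra_simps)
      thus "complex_of_real (trace (M \<nu>)) = 2 + e 1 2 \<nu> * e 2 1 \<nu> - (e 1 1 \<nu> - 1) * (e 2 2 \<nu> - 1)"
        by (simp add: e_def)
    qed
    have "((\<lambda>\<nu>. 2 + e 1 2 \<nu> * e 2 1 \<nu> - (e 1 1 \<nu> - 1) * (e 2 2 \<nu> - 1)) has_vector_derivative
        (0 + (e 1 2 \<nu>0 * (complex_of_real (2 * \<nu>0) * deriv Cf lc) + (complex_of_real (2 * \<nu>0) * deriv Bf lc) * e 2 1 \<nu>0)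
          - ((e 1 1 \<nu>0 - 1) * ((complex_of_real (2 * \<nu>0) * deriv Df lc) - 0) + ((complex_of_real (2 * \<nu>0) * deriv A lc) - 0) * (e 2 2 \<nu>0 - 1)))) (at \<nu>0)"
      by (intro has_vector_derivative_diff has_vector_derivative_add has_vector_derivative_mult ve has_vector_derivative_const)
    moreover have "e 1 2 \<nu>0 = 0" "e 2 1 \<nu>0 = 0" "e 1 1 \<nu>0 = 1" "e 2 2 \<nu>0 = 1"
      using b0 c0 a1 d1 by (simp_all add: e_def)
    ultimately have "((\<lambda>\<nu>. complex_of_real (trace (M \<nu>))) has_vector_derivative 0) (at \<nu>0)"
      unfolding feq by simp
    with vtr have "complex_of_real d = 0" by (rule vector_derivative_unique_at)
    thus False using dd(2) by simp
  qed
  have \<tau>lc: "\<tau> lc = 2" using \<tau>real[of \<nu>0] tr0 by (simp add: lc_def del: of_real_power)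
  obtain r1 where r1: "r1 > 0" "inj_on \<tau> (ball lc r1)"
    using has_complex_derivative_locally_injective[OF \<tau>holo _ open_UNIV dnz] by blast
  define S where "S = ball lc r1"
  have \<tau>S: "\<tau> holomorphic_on S" using \<tau>holo by (rule holomorphic_on_subset) auto
  obtain g where g_holo: "g holomorphic_on \<tau> ` S" and ginv: "\<And>z. z \<in> S \<Longrightarrow> g (\<tau> z) = z"
    using holomorphic_has_inverse[OF \<tau>S open_ball[of lc r1, folded S_def] r1(2)[folded S_def]] by metis
  have openT: "open (\<tau> ` S)"
    using open_mapping_thm3[OF \<tau>S open_ball[of lc r1, folded S_def] r1(2)[folded S_def]] .
  have lcS: "lc \<in> S" using r1 by (simp add: S_def)
  have twoT: "2 \<in> \<tau> ` S" using lcS \<tau>lc by force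
  obtain r2 where r2: "r2 > 0" "\<And>w. w \<in> ball 0 r2 \<Longrightarrow> 2 * cos w \<in> \<tau> ` S"
  proof (rule cont_ball[of 0 "\<lambda>w::complex. 2 * cos w" "\<tau> ` S"])
    show "continuous (at 0) (\<lambda>w::complex. 2 * cos w)" by (intro continuous_intros)
  qed (use openT twoT in auto)
  define G where "G w = g (2 * cos w)" for w
  have G_holo: "G holomorphic_on ball 0 r2"
  proof -
    have "(g \<circ> (\<lambda>w. 2 * cos w)) holomorphic_on ball 0 r2"
      by (rule holomorphic_on_compose_gen[OF _ g_holo]) (auto intro!: holomorphic_intros r2(2))
    thus ?thesis by (simp add: G_def[abs_def] o_def)
  qed
  have \<tau>G: "\<tau> (G w) = 2 * cos w" if w: "w \<in> ball 0 r2" for w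
  proof -
    obtain z where z: "z \<in> S" "2 * cos w = \<tau> z" using r2(2)[OF w] by auto
    thus ?thesis by (simp add: G_def ginv)
  qed
  have G0: "G 0 = lc" using ginv[OF lcS] \<tau>lc by (simp add: G_def)
  define \<alpha> where "\<alpha> w = A (G w)" for w
  define \<beta> where "\<beta> w = Bf (G w)" for w
  define \<gamma> where "\<gamma> w = Cf (G w)" for w
  define \<delta> where "\<delta> w = Df (G w)" for w
  have eholo: "\<alpha> holomorphic_on ball 0 r2" "\<beta> holomorphic_on ball 0 r2"
    "\<gamma> holomorphic_on ball 0 r2" "\<delta> holomorphic_on ball 0 r2"
    unfolding \<alpha>_def[abs_def] \<beta>_def[abs_def] \<gamma>_def[abs_def] \<delta>_def[abs_def]
    using holomorphic_on_compose_gen[OF G_holo holo(1)] holomorphic_on_compose_gen[OF G_holo holo(2)]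
      holomorphic_on_compose_gen[OF G_holo holo(3)] holomorphic_on_compose_gen[OF G_holo holo(4)]
    by (simp_all add: o_def)
  have e0: "\<alpha> 0 = of_real (M \<nu>0 $1$1)" "\<beta> 0 = of_real (M \<nu>0 $1$2)"
    "\<gamma> 0 = of_real (M \<nu>0 $2$1)" "\<delta> 0 = of_real (M \<nu>0 $2$2)"
    unfolding \<alpha>_def \<beta>_def \<gamma>_def \<delta>_def G0 lc_def by (simp_all only: Ereal)
  obtain x y :: complex where Q0: "\<beta> 0 * y^2 - \<gamma> 0 * x^2 + (\<alpha> 0 - \<delta> 0) * x * y \<noteq> 0"
  proof (cases "M \<nu>0 $1$2 \<noteq> 0")
    case True
    hence "\<beta> 0 * 1^2 - \<gamma> 0 * 0^2 + (\<alpha> 0 - \<delta> 0) * 0 * 1 \<noteq> 0" by (simp add: e0)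
    thus ?thesis by (rule that)
  next
    case False
    hence "M \<nu>0 $2$1 \<noteq> 0" using bc by simp
    hence "\<beta> 0 * 0^2 - \<gamma> 0 * 1^2 + (\<alpha> 0 - \<delta> 0) * 1 * 0 \<noteq> 0" by (simp add: e0)
    thus ?thesis by (rule that)
  qed
  define D where "D w = Dmat (\<alpha> w) (\<beta> w) (\<gamma> w) (\<delta> w) (cos w) (sinc w) x y" for w
  define h where "h w = sinc w * (\<beta> w * y^2 - \<gamma> w * x^2 + (\<alpha> w - \<delta> w) * x * y)" for w
  have detD: "det (D w) = h w" for w by (simp add: D_def h_def Dmat_det)
  have h_holo: "h holomorphic_on ball 0 r2"
    unfolding h_def[abs_def] using eholo sinc_holo[of r2] by (intro holomorphic_intros)
  have h0: "h 0 \<noteq> 0" using Q0 by (simp add: h_def sinc_0)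
  have "continuous (at 0) h"
    using holomorphic_on_imp_continuous_on[OF h_holo] r2(1)
    by (simp add: continuous_on_eq_continuous_at)
  then obtain r3 where r3: "r3 > 0" "\<And>w. w \<in> ball 0 r3 \<Longrightarrow> h w \<in> - {0}"
    using cont_ball[of 0 h "- {0}"] h0 by auto
  define r where "r = min r2 r3"
  have r: "r > 0" using r2 r3 by (simp add: r_def)
  have rsub: "ball 0 r \<subseteq> ball 0 r2" "ball 0 r \<subseteq> ball 0 r3" by (auto simp: r_def)
  show ?thesis
  proof (intro exI[of _ D] exI[of _ r] conjI r allI ballI)
    fix i j :: 2
    have ent: "(\<lambda>w. D w $ i $ j) holomorphic_on ball 0 r2"
      using exhaust_2[of i] exhaust_2[of j] eholo sinc_holo[of r2]
      by (auto simp: D_def Dmat_def intro!: holomorphic_intros)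
    show "(\<lambda>w. D w $ i $ j) analytic_on ball 0 r"
      using holomorphic_on_subset[OF ent rsub(1)] by (simp add: analytic_on_open)
  next
    fix w :: complex assume "w \<in> ball 0 r"
    hence "w \<in> ball 0 r3" using rsub(2) by blast
    thus "det (D w) \<noteq> 0" using r3(2) detD by auto
  next
    have E2: "\<forall>\<^sub>F \<nu> in nhds \<nu>0. \<omega> \<nu> \<in> ball 0 r"
      by (rule cont_ev[OF \<omega>_cont]) (use r \<omega>_edge in auto)
    have E3: "\<forall>\<^sub>F \<nu> in nhds \<nu>0. complex_of_real (\<nu>\<^sup>2) \<in> S"
      by (rule cont_ev) (use lcS in \<open>auto simp: lc_def S_def intro!: continuous_intros\<close>)
    show "\<forall>\<^sub>F \<nu> in nhds \<nu>0. \<omega> \<nu> \<in> ball 0 r \<and>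
              matrix_inv (D (\<omega> \<nu>)) ** cmat (M \<nu>) ** D (\<omega> \<nu>) = normal_form (\<omega> \<nu>)"
      using E2 E3 \<omega>_cos
    proof eventually_elim
      case (elim \<nu>)
      define w where "w = \<omega> \<nu>"
      have wr1: "w \<in> ball 0 r" using elim(1) by (simp add: w_def)
      have wr: "w \<in> ball 0 r" "w \<in> ball 0 r2" using wr1 rsub(1) by blast+
      have "\<tau> (complex_of_real (\<nu>\<^sup>2)) = 2 * cos w"
        using elim(3) \<tau>real[of \<nu>] by (simp add: w_def mult.commute del: of_real_power)
      hence Gw: "G w = complex_of_real (\<nu>\<^sup>2)" using ginv[OF elim(2)] by (simp add: G_def)
      have ev: "\<alpha> w = of_real (M \<nu> $1$1)" "\<beta> w = of_real (M \<nu> $1$2)"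
        "\<gamma> w = of_real (M \<nu> $2$1)" "\<delta> w = of_real (M \<nu> $2$2)"
        unfolding \<alpha>_def \<beta>_def \<gamma>_def \<delta>_def Gw by (simp_all only: Ereal)
      have cm: "cmat (M \<nu>) = Mmat (\<alpha> w) (\<beta> w) (\<gamma> w) (\<delta> w)"
        unfolding ev by (simp add: vec_eq_iff forall_2 cmat_def Mmat_def)
      have tr: "\<alpha> w + \<delta> w = 2 * cos w"
        using \<tau>G[OF wr(2)] by (simp add: \<tau>_def \<alpha>_def \<delta>_def)
      have dt: "\<alpha> w * \<delta> w - \<beta> w * \<gamma> w = 1"
      proof -
        have "\<alpha> w * \<delta> w - \<beta> w * \<gamma> w = complex_of_real (M \<nu> $1$1 * M \<nu> $2$2 - M \<nu> $1$2 * M \<nu> $2$1)"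
          unfolding ev by simp
        thus ?thesis using Mdet[of \<nu>] by simp
      qed
      have "w \<in> ball 0 r3" using rsub(2) wr(1) by blast
      hence dz: "det (D w) \<noteq> 0" using r3(2) detD by auto
      show ?case
        using conj_normal[OF tr dt dz[unfolded D_def]] elim(1) unfolding cm D_def w_def by simp
    qed
  qed
qed


end
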